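(* Let $\rho$ be a density operator on $\mathcal{H}_n\otimes\mathcal{H}_n$ whose range is contained in $\mathcal{K}$ (so $\mathrm{Tr}\rho=1$), and let $\mathcal{E}=\{p_i,U_i\}$ be an ensemble of Gaussian unitaries which is Majorana mixing. Then $$\mathcal{T}_{\mathcal{E}}(\rho)=\frac{\Pi_{\mathcal{K}}}{\dim\mathcal{K}},$$ where $\Pi_{\mathcal{K}}$ is the orthogonal projector onto $\mathcal{K}$.
   Context: $\mathcal{H}_n$ is the Fock space of $n$ fermionic modes with Majorana operators $c_1,\dots,c_{2n}$ ($c_{2j-1}=a_j+a_j^\dagger$, $c_{2j}=-i(a_j-a_j^\dagger)$). For $x\in\{0,1\}^{2n}$ let $c(x)=c_1^{x_1}c_2^{x_2}\cdots c_{2n}^{x_{2n}}$ and $|x|$ its Hamming weight. Let $\Lambda=\sum_{p=1}^{2n}c_p\otimes c_p$ acting on $\mathcal{H}_n\otimes\mathcal{H}_n$ (ordinary tensor product), and $\mathcal{K}=\ker\Lambda$. For $k=0,\dots,2n$ let $T_k=\binom{2n}{k}^{-1}\sum_{y\in\{0,1\}^{2n},|y|=k}c(y)\otimes c(y)$. A Gaussian unitary is a unitary $U$ on $\mathcal{H}_n$ with $Uc_pU^\dagger=\sum_qR_{pq}c_q$ for a real orthogonal $R$. A probability distribution $\mathcal{E}=\{p_i,U_i\}$ over Gaussian unitaries is Majorana mixing if $\sum_ip_i(U_i\otimes U_i)[c(x)\otimes c(x)](U_i^\dagger\otimes U_i^\dagger)=T_{|x|}$ for all $x\in\{0,1\}^{2n}$.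 The channel $\mathcal{T}_{\mathcal{E}}$ is $\mathcal{T}_{\mathcal{E}}(\sigma)=\sum_ip_i(U_i\otimes U_i)\Big[\frac{1}{2^{2n}}\sum_{x\in\{0,1\}^{2n}}(c(x)\otimes c(x))\sigma(c(x)^\dagger\otimes c(x)^\dagger)\Big](U_i^\dagger\otimes U_i^\dagger)$. *)

theory Defs
  imports "Jordan_Normal_Form.Matrix_Kernel" "Jordan_Normal_Form.Schur_Decomposition"
begin

text \<open>The Fock space H_n of
  n fermionic modes is C^(2^n), with orthonormal occupation-number basis |x_0 ... x_(n-1)>
  indexed by i < 2^n, where x_k = bit k of i.  H_n (x) H_n is C^(4^n) and the ordinary
  tensor product of operators is the Kronecker product.\<close>

definition dag :: "complex mat \<Rightarrow> complex mat" where
  "dag A = mat_adjoint A"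

definition kron :: "complex mat \<Rightarrow> complex mat \<Rightarrow> complex mat" where
  "kron A B = mat (dim_row A * dim_row B) (dim_col A * dim_col B)
     (\<lambda>(i, j). A $$ (i div dim_row B, j div dim_col B) * B $$ (i mod dim_row B, j mod dim_col B))"

definition msum :: "nat \<Rightarrow> 'i set \<Rightarrow> ('i \<Rightarrow> complex mat) \<Rightarrow> complex mat" where
  "msum N I f = mat N N (\<lambda>(i, j). \<Sum>k\<in>I. f k $$ (i, j))"

definition occ :: "nat \<Rightarrow> nat \<Rightarrow> bool" where
  "occ i k = odd (i div 2 ^ k)"

text \<open>Annihilation operator a_(k+1) (mode index k is 0-based), with the Jordan-Wigner sign:
  a_(k+1)|x> = (-1)^(x_0+...+x_(k-1)) |x - e_k> if x_k = 1, and 0 otherwise.\<close>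
definition annih :: "nat \<Rightarrow> nat \<Rightarrow> complex mat" where
  "annih n k = mat (2 ^ n) (2 ^ n) (\<lambda>(r, c).
     if occ c k \<and> r = c - 2 ^ k then (- 1) ^ card {l. l < k \<and> occ c l} else 0)"

definition majorana :: "nat \<Rightarrow> nat \<Rightarrow> complex mat" where
  "majorana n p = (let a = annih n ((p - 1) div 2) in
     if odd p then a + dag a else (- \<i>) \<cdot>\<^sub>m (a - dag a))"

text \<open>Binary strings x in {0,1}^(2n) are bool lists of length 2n; x ! (p-1) is x_p.\<close>
definition bitstrings :: "nat \<Rightarrow> bool list set" where
  "bitstrings n = {x. length x = 2 * n}"

definition hw :: "bool list \<Rightarrow> nat" where
  "hw x = length (filter id x)"

definition cmon :: "nat \<Rightarrow> bool list \<Rightarrow> complex mat" where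
  "cmon n x = foldr (\<lambda>p M. (if x ! (p - 1) then majorana n p else 1\<^sub>m (2 ^ n)) * M)
                [1..<2 * n + 1] (1\<^sub>m (2 ^ n))"

definition Lambda :: "nat \<Rightarrow> complex mat" where
  "Lambda n = msum (4 ^ n) {1..2 * n} (\<lambda>p. kron (majorana n p) (majorana n p))"

definition Kspace :: "nat \<Rightarrow> complex vec set" where
  "Kspace n = mat_kernel (Lambda n)"

definition Tk :: "nat \<Rightarrow> nat \<Rightarrow> complex mat" where
  "Tk n k = (1 / of_nat (2 * n choose k)) \<cdot>\<^sub>m
     msum (4 ^ n) {y \<in> bitstrings n. hw y = k} (\<lambda>y. kron (cmon n y) (cmon n y))"

definition unitary_mat :: "nat \<Rightarrow> complex mat \<Rightarrow> bool" where
  "unitary_mat N U \<longleftrightarrow> U \<in> carrier_mat N N \<and> U * dag U = 1\<^sub>m N \<and> dag U * U = 1\<^sub>m N"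

definition gaussian_unitary :: "nat \<Rightarrow> complex mat \<Rightarrow> bool" where
  "gaussian_unitary n U \<longleftrightarrow> unitary_mat (2 ^ n) U \<and>
     (\<exists>R :: nat \<Rightarrow> nat \<Rightarrow> real.
        (\<forall>p\<in>{1..2 * n}. \<forall>p'\<in>{1..2 * n}.
           (\<Sum>q\<in>{1..2 * n}. R p q * R p' q) = (if p = p' then 1 else 0)) \<and>
        (\<forall>p\<in>{1..2 * n}. U * majorana n p * dag U =
           msum (2 ^ n) {1..2 * n} (\<lambda>q. complex_of_real (R p q) \<cdot>\<^sub>m majorana n q)))"

definition gaussian_ensemble :: "nat \<Rightarrow> 'i set \<Rightarrow> ('i \<Rightarrow> real) \<Rightarrow> ('i \<Rightarrow> complex mat) \<Rightarrow> bool" where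
  "gaussian_ensemble n I pr U \<longleftrightarrow> finite I \<and> (\<forall>i\<in>I. 0 \<le> pr i) \<and> (\<Sum>i\<in>I. pr i) = 1 \<and>
     (\<forall>i\<in>I. gaussian_unitary n (U i))"

definition majorana_mixing :: "nat \<Rightarrow> 'i set \<Rightarrow> ('i \<Rightarrow> real) \<Rightarrow> ('i \<Rightarrow> complex mat) \<Rightarrow> bool" where
  "majorana_mixing n I pr U \<longleftrightarrow>
     (\<forall>x\<in>bitstrings n.
        msum (4 ^ n) I (\<lambda>i. complex_of_real (pr i) \<cdot>\<^sub>m
          (kron (U i) (U i) * kron (cmon n x) (cmon n x) * dag (kron (U i) (U i))))
        = Tk n (hw x))"

definition channel :: "nat \<Rightarrow> 'i set \<Rightarrow> ('i \<Rightarrow> real) \<Rightarrow> ('i \<Rightarrow> complex mat) \<Rightarrow> complex mat \<Rightarrow> complex mat" where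
  "channel n I pr U \<sigma> =
     msum (4 ^ n) I (\<lambda>i. complex_of_real (pr i) \<cdot>\<^sub>m
       (kron (U i) (U i) *
        ((1 / 2 ^ (2 * n)) \<cdot>\<^sub>m msum (4 ^ n) (bitstrings n)
           (\<lambda>x. kron (cmon n x) (cmon n x) * \<sigma> * dag (kron (cmon n x) (cmon n x))))
        * dag (kron (U i) (U i))))"

definition mtrace :: "complex mat \<Rightarrow> complex" where
  "mtrace A = (\<Sum>i<dim_row A. A $$ (i, i))"

definition density_op :: "nat \<Rightarrow> complex mat \<Rightarrow> bool" where
  "density_op N \<rho> \<longleftrightarrow> \<rho> \<in> carrier_mat N N \<and> dag \<rho> = \<rho> \<and>
     (\<forall>v\<in>carrier_vec N. 0 \<le> Re (conjugate v \<bullet> (\<rho> *\<^sub>v v))) \<and> mtrace \<rho> = 1"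

definition is_orth_proj :: "nat \<Rightarrow> complex mat \<Rightarrow> complex vec set \<Rightarrow> bool" where
  "is_orth_proj N P S \<longleftrightarrow> P \<in> carrier_mat N N \<and> dag P = P \<and> P * P = P \<and>
     (\<lambda>v. P *\<^sub>v v) ` carrier_vec N = S"

definition orth_proj :: "nat \<Rightarrow> complex vec set \<Rightarrow> complex mat" where
  "orth_proj N S = (THE P. is_orth_proj N P S)"

end

theory Submission
  imports Defs
begin

lemma dag_dims[simp]: "dim_row (dag A) = dim_col A" "dim_col (dag A) = dim_row A"
  unfolding dag_def mat_adjoint_def by auto

lemma dag_index[simp]: "i < dim_col A \<Longrightarrow> j < dim_row A \<Longrightarrow> dag A $$ (i,j) = cnj (A $$ (j,i))"
  unfolding dag_def mat_adjoint_def by (auto simp: mat_of_rows_index)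

lemma dag_carrier[simp]: "A \<in> carrier_mat n m \<Longrightarrow> dag A \<in> carrier_mat m n"
  by auto

lemma dag_dag[simp]: "dag (dag A) = A"
  by (rule eq_matI, auto)

lemma dag_mult: "A \<in> carrier_mat n m \<Longrightarrow> B \<in> carrier_mat m k \<Longrightarrow> dag (A * B) = dag B * dag A"
  by (rule eq_matI, auto simp: scalar_prod_def sum_distrib_left mult.commute intro!: sum.cong)

lemma dag_one[simp]: "dag (1\<^sub>m n) = 1\<^sub>m n"
  by (rule eq_matI, auto)

lemma dag_zero[simp]: "dag (0\<^sub>m n n) = 0\<^sub>m n n"
  by (rule eq_matI, auto)

lemma dag_smult: "dag (c \<cdot>\<^sub>m A) = cnj c \<cdot>\<^sub>m dag A"
  by (rule eq_matI, auto)

lemma dag_add: "A \<in> carrier_mat n m \<Longrightarrow> B \<in> carrier_mat n m \<Longrightarrow> dag (A + B) = dag A + dag B"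
  by (rule eq_matI, auto)

lemma dag_minus: "A \<in> carrier_mat n m \<Longrightarrow> B \<in> carrier_mat n m \<Longrightarrow> dag (A - B) = dag A - dag B"
  by (rule eq_matI, auto)

lemma msum_dims[simp]: "dim_row (msum N I f) = N" "dim_col (msum N I f) = N"
  unfolding msum_def by auto

lemma msum_carrier[simp]: "msum N I f \<in> carrier_mat N N"
  unfolding carrier_mat_def by auto

lemma msum_index[simp]: "i < N \<Longrightarrow> j < N \<Longrightarrow> msum N I f $$ (i,j) = (\<Sum>k\<in>I. f k $$ (i,j))"
  unfolding msum_def by auto

lemma msum_cong: "(\<And>k. k \<in> I \<Longrightarrow> f k = g k) \<Longrightarrow> msum N I f = msum N I g"
  unfolding msum_def by (auto intro!: sum.cong)

lemma msum_mult_left: assumes "A \<in> carrier_mat N N" "\<And>k. k \<in> I \<Longrightarrow> f k \<in> carrier_mat N N"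
  shows "A * msum N I f = msum N I (\<lambda>k. A * f k)"
proof (rule eq_matI)
  fix i j assume "i < dim_row (msum N I (\<lambda>k. A * f k))" "j < dim_col (msum N I (\<lambda>k. A * f k))"
  then have ij: "i < N" "j < N" by auto
  have "(A * msum N I f) $$ (i,j) = (\<Sum>l<N. A $$ (i,l) * (\<Sum>k\<in>I. f k $$ (l,j)))"
    using assms ij by (auto simp: scalar_prod_def lessThan_atLeast0 intro!: sum.cong)
  also have "\<dots> = (\<Sum>k\<in>I. \<Sum>l<N. A $$ (i,l) * f k $$ (l,j))"
    by (simp add: sum_distrib_left sum.swap[of _ I])
  also have "\<dots> = msum N I (\<lambda>k. A * f k) $$ (i,j)"
  proof -
    have "(A * f k) $$ (i,j) = (\<Sum>l<N. A $$ (i,l) * f k $$ (l,j))" if "k \<in> I" for k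
      using assms(1) assms(2)[OF that] ij by (auto simp: scalar_prod_def lessThan_atLeast0 intro!: sum.cong)
    then show ?thesis using ij by simp
  qed
  finally show "(A * msum N I f) $$ (i,j) = msum N I (\<lambda>k. A * f k) $$ (i,j)" .
qed (use assms in auto)

lemma msum_mult_right: assumes "A \<in> carrier_mat N N" "\<And>k. k \<in> I \<Longrightarrow> f k \<in> carrier_mat N N"
  shows "msum N I f * A = msum N I (\<lambda>k. f k * A)"
proof (rule eq_matI)
  fix i j assume "i < dim_row (msum N I (\<lambda>k. f k * A))" "j < dim_col (msum N I (\<lambda>k. f k * A))"
  then have ij: "i < N" "j < N" by auto
  have "(msum N I f * A) $$ (i,j) = (\<Sum>l<N. (\<Sum>k\<in>I. f k $$ (i,l)) * A $$ (l,j))"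
    using assms ij by (auto simp: scalar_prod_def lessThan_atLeast0 intro!: sum.cong)
  also have "\<dots> = (\<Sum>k\<in>I. \<Sum>l<N. f k $$ (i,l) * A $$ (l,j))"
    by (simp add: sum_distrib_right sum.swap[of _ I])
  also have "\<dots> = msum N I (\<lambda>k. f k * A) $$ (i,j)"
  proof -
    have "(f k * A) $$ (i,j) = (\<Sum>l<N. f k $$ (i,l) * A $$ (l,j))" if "k \<in> I" for k
      using assms(1) assms(2)[OF that] ij by (auto simp: scalar_prod_def lessThan_atLeast0 intro!: sum.cong)
    then show ?thesis using ij by simp
  qed
  finally show "(msum N I f * A) $$ (i,j) = msum N I (\<lambda>k. f k * A) $$ (i,j)" .
qed (use assms in auto)

lemma msum_smult: assumes "\<And>k. k \<in> I \<Longrightarrow> f k \<in> carrier_mat N N"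
  shows "c \<cdot>\<^sub>m msum N I f = msum N I (\<lambda>k. c \<cdot>\<^sub>m f k)"
proof (rule eq_matI)
  fix i j assume "i < dim_row (msum N I (\<lambda>k. c \<cdot>\<^sub>m f k))" "j < dim_col (msum N I (\<lambda>k. c \<cdot>\<^sub>m f k))"
  then have ij: "i < N" "j < N" by auto
  have "(c \<cdot>\<^sub>m f k) $$ (i,j) = c * f k $$ (i,j)" if "k \<in> I" for k
    using assms[OF that] ij by auto
  then show "(c \<cdot>\<^sub>m msum N I f) $$ (i, j) = msum N I (\<lambda>k. c \<cdot>\<^sub>m f k) $$ (i, j)"
    using ij by (simp add: sum_distrib_left)
qed auto

lemma msum_smult_const: assumes "A \<in> carrier_mat N N"
  shows "msum N I (\<lambda>k. c k \<cdot>\<^sub>m A) = (\<Sum>k\<in>I. c k) \<cdot>\<^sub>m A"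
  by (rule eq_matI, use assms in \<open>auto simp: sum_distrib_right\<close>)

lemma msum_add: assumes "\<And>k. k \<in> I \<Longrightarrow> f k \<in> carrier_mat N N" "\<And>k. k \<in> I \<Longrightarrow> g k \<in> carrier_mat N N"
  shows "msum N I (\<lambda>k. f k + g k) = msum N I f + msum N I g"
proof (rule eq_matI)
  fix i j assume "i < dim_row (msum N I f + msum N I g)" "j < dim_col (msum N I f + msum N I g)"
  then have ij: "i < N" "j < N" by auto
  have "(f k + g k) $$ (i,j) = f k $$ (i,j) + g k $$ (i,j)" if "k \<in> I" for k
    using assms(1)[OF that] assms(2)[OF that] ij by auto
  then show "msum N I (\<lambda>k. f k + g k) $$ (i, j) = (msum N I f + msum N I g) $$ (i, j)"
    using ij by (simp add: sum.distrib)
qed auto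

lemma msum_swap: "msum N I (\<lambda>i. msum N J (f i)) = msum N J (\<lambda>j. msum N I (\<lambda>i. f i j))"
  by (rule eq_matI, auto simp: sum.swap[of _ I])

lemma msum_zero: "(\<And>k. k \<in> I \<Longrightarrow> f k = 0\<^sub>m N N) \<Longrightarrow> msum N I f = 0\<^sub>m N N"
  by (rule eq_matI, auto)

lemma msum_delta: assumes "finite I" "a \<in> I" "f a \<in> carrier_mat N N" "\<And>k. k \<in> I \<Longrightarrow> k \<noteq> a \<Longrightarrow> f k = 0\<^sub>m N N"
  shows "msum N I f = f a"
proof (rule eq_matI)
  fix i j assume ij: "i < dim_row (f a)" "j < dim_col (f a)"
  then have ij': "i < N" "j < N" using assms by auto
  have "(\<Sum>k\<in>I. f k $$ (i,j)) = f a $$ (i,j) + (\<Sum>k\<in>I-{a}. f k $$ (i,j))"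
    by (rule sum.remove) (use assms in auto)
  also have "(\<Sum>k\<in>I-{a}. f k $$ (i,j)) = 0"
    by (rule sum.neutral) (use assms ij' in auto)
  finally have "(\<Sum>k\<in>I. f k $$ (i,j)) = f a $$ (i,j)" by simp
  then show "msum N I f $$ (i,j) = f a $$ (i,j)" using ij' by simp
qed (use assms in auto)

lemma msum_subset: assumes "J \<subseteq> I" "finite I" "\<And>k. k \<in> I - J \<Longrightarrow> f k = 0\<^sub>m N N"
  shows "msum N I f = msum N J f"
proof (rule eq_matI)
  fix i j assume "i < dim_row (msum N J f)" "j < dim_col (msum N J f)"
  then have ij: "i < N" "j < N" by auto
  have "(\<Sum>k\<in>I. f k $$ (i,j)) = (\<Sum>k\<in>J. f k $$ (i,j))"
    by (rule sum.mono_neutral_right) (use assms ij in auto)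
  then show "msum N I f $$ (i,j) = msum N J f $$ (i,j)" using ij by simp
qed auto

lemma msum_image: assumes "inj_on h J"
  shows "msum N (h ` J) f = msum N J (\<lambda>k. f (h k))"
  by (rule eq_matI, use assms in \<open>auto simp: sum.reindex\<close>)

lemma msum_Sigma: assumes "finite I" "\<And>i. i \<in> I \<Longrightarrow> finite (J i)"
  shows "msum N (Sigma I J) (\<lambda>(i,j). f i j) = msum N I (\<lambda>i. msum N (J i) (f i))"
proof (rule eq_matI)
  fix i j assume "i < dim_row (msum N I (\<lambda>i. msum N (J i) (f i)))" "j < dim_col (msum N I (\<lambda>i. msum N (J i) (f i)))"
  then have ij: "i < N" "j < N" by auto
  have "(\<Sum>k\<in>Sigma I J. (case k of (a,b) \<Rightarrow> f a b) $$ (i,j)) = (\<Sum>(a,b)\<in>Sigma I J. f a b $$ (i,j))"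
    by (rule sum.cong) auto
  also have "\<dots> = (\<Sum>a\<in>I. \<Sum>b\<in>J a. f a b $$ (i,j))"
    by (rule sum.Sigma[symmetric]) (use assms in auto)
  finally show "msum N (Sigma I J) (\<lambda>(i, j). f i j) $$ (i, j) = msum N I (\<lambda>i. msum N (J i) (f i)) $$ (i, j)"
    using ij by simp
qed auto

lemma msum_dag: assumes "\<And>k. k \<in> I \<Longrightarrow> f k \<in> carrier_mat N N"
  shows "dag (msum N I f) = msum N I (\<lambda>k. dag (f k))"
proof (rule eq_matI)
  fix i j assume "i < dim_row (msum N I (\<lambda>k. dag (f k)))" "j < dim_col (msum N I (\<lambda>k. dag (f k)))"
  then have ij: "i < N" "j < N" by auto
  have "dag (f k) $$ (i,j) = cnj (f k $$ (j,i))" if "k \<in> I" for k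
    using assms[OF that] ij by auto
  then show "dag (msum N I f) $$ (i, j) = msum N I (\<lambda>k. dag (f k)) $$ (i, j)" using ij by simp
qed auto

lemma msum_partition: assumes "finite I" "\<And>x. x \<in> I \<Longrightarrow> h x \<in> K" "finite K"
  shows "msum N I f = msum N K (\<lambda>k. msum N {x\<in>I. h x = k} f)"
proof (rule eq_matI)
  fix i j assume "i < dim_row (msum N K (\<lambda>k. msum N {x\<in>I. h x = k} f))" "j < dim_col (msum N K (\<lambda>k. msum N {x\<in>I. h x = k} f))"
  then have ij: "i < N" "j < N" by auto
  have "(\<Sum>x\<in>I. f x $$ (i,j)) = (\<Sum>k\<in>K. \<Sum>x\<in>{x\<in>I. h x = k}. f x $$ (i,j))"
    by (rule sum.group[symmetric]) (use assms in auto)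
  then show "msum N I f $$ (i,j) = msum N K (\<lambda>k. msum N {x\<in>I. h x = k} f) $$ (i,j)"
    using ij by simp
qed auto

lemma mtrace_mult_comm: assumes "A \<in> carrier_mat n m" "B \<in> carrier_mat m n"
  shows "mtrace (A * B) = mtrace (B * A)"
proof -
  have "mtrace (A * B) = (\<Sum>i<n. \<Sum>l<m. A $$ (i,l) * B $$ (l,i))"
    using assms by (auto simp: mtrace_def scalar_prod_def lessThan_atLeast0 intro!: sum.cong)
  also have "\<dots> = (\<Sum>l<m. \<Sum>i<n. B $$ (l,i) * A $$ (i,l))"
    by (subst sum.swap) (simp add: mult.commute)
  also have "\<dots> = mtrace (B * A)"
    using assms by (auto simp: mtrace_def scalar_prod_def lessThan_atLeast0 intro!: sum.cong)
  finally show ?thesis .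
qed

lemma mtrace_msum: assumes "\<And>k. k \<in> I \<Longrightarrow> f k \<in> carrier_mat N N"
  shows "mtrace (msum N I f) = (\<Sum>k\<in>I. mtrace (f k))"
proof -
  have "mtrace (f k) = (\<Sum>i<N. f k $$ (i,i))" if "k \<in> I" for k
    using assms[OF that] by (auto simp: mtrace_def)
  then show ?thesis by (auto simp: mtrace_def sum.swap[of _ I] intro!: sum.cong)
qed
  
lemma mtrace_smult: "A \<in> carrier_mat n n \<Longrightarrow> mtrace (c \<cdot>\<^sub>m A) = c * mtrace A"
  by (auto simp: mtrace_def sum_distrib_left intro!: sum.cong)

lemma mtrace_one: "mtrace (1\<^sub>m n) = of_nat n"
  by (auto simp: mtrace_def)

lemma mtrace_zero: "mtrace (0\<^sub>m n n) = 0"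
  by (auto simp: mtrace_def)

lemma mtrace_add: "A \<in> carrier_mat n n \<Longrightarrow> B \<in> carrier_mat n n \<Longrightarrow> mtrace (A + B) = mtrace A + mtrace B"
  by (auto simp: mtrace_def sum.distrib)


lemma sum_add_split: "(\<Sum>k<m+b. g k) = (\<Sum>k<m. g k) + (\<Sum>v<b. g (m+v::nat))"
  by (induction b) (auto simp: add.assoc)

lemma sum_mult_split: "(\<Sum>k<a*b. g k) = (\<Sum>u<a. \<Sum>v<b. g (u*b+v::nat))"
proof (induction a)
  case (Suc a)
  have "(\<Sum>k<Suc a * b. g k) = (\<Sum>k<a*b + b. g k)" by (simp add: add.commute)
  also have "\<dots> = (\<Sum>k<a*b. g k) + (\<Sum>v<b. g (a*b+v))" by (rule sum_add_split)
  finally show ?case using Suc by simp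
qed simp

lemma sum_mult_split': assumes "0 < b"
  shows "(\<Sum>k<a*b. g (k div b) (k mod (b::nat))) = (\<Sum>u<a. \<Sum>v<b. g u v)"
  unfolding sum_mult_split using assms by (auto intro!: sum.cong)

lemma kron_dims[simp]: "dim_row (kron A B) = dim_row A * dim_row B" "dim_col (kron A B) = dim_col A * dim_col B"
  unfolding kron_def by auto

lemma kron_carrier[simp]: "A \<in> carrier_mat a a' \<Longrightarrow> B \<in> carrier_mat b b' \<Longrightarrow> kron A B \<in> carrier_mat (a*b) (a'*b')"
  by auto

lemma kron_index[simp]: "i < dim_row A * dim_row B \<Longrightarrow> j < dim_col A * dim_col B \<Longrightarrow>
  kron A B $$ (i,j) = A $$ (i div dim_row B, j div dim_col B) * B $$ (i mod dim_row B, j mod dim_col B)"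
  unfolding kron_def by auto

lemma div_less_mult: "i < a * (b::nat) \<Longrightarrow> i div b < a"
  by (simp add: less_mult_imp_div_less)

lemma mod_less_mult: "i < a * (b::nat) \<Longrightarrow> i mod b < b"
  by (cases "b = 0") auto

lemma kron_mult: assumes A: "A \<in> carrier_mat a a" and C: "C \<in> carrier_mat a a"
  and B: "B \<in> carrier_mat b b" and D: "D \<in> carrier_mat b b"
  shows "kron A B * kron C D = kron (A * C) (B * D)"
proof (rule eq_matI)
  fix i j assume "i < dim_row (kron (A * C) (B * D))" "j < dim_col (kron (A * C) (B * D))"
  then have ij: "i < a * b" "j < a * b" using A B C D by auto
  then have b0: "0 < b" by (cases b) auto
  have "(kron A B * kron C D) $$ (i,j) = (\<Sum>k<a*b. (A $$ (i div b, k div b) * B $$ (i mod b, k mod b)) *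
      (C $$ (k div b, j div b) * D $$ (k mod b, j mod b)))"
    using A B C D ij by (auto simp: scalar_prod_def lessThan_atLeast0 intro!: sum.cong)
  also have "\<dots> = (\<Sum>u<a. \<Sum>v<b. (A $$ (i div b, u) * B $$ (i mod b, v)) *
      (C $$ (u, j div b) * D $$ (v, j mod b)))"
    by (rule sum_mult_split'[OF b0, where g = "\<lambda>u v. (A $$ (i div b, u) * B $$ (i mod b, v)) *
      (C $$ (u, j div b) * D $$ (v, j mod b))"])
  also have "\<dots> = (\<Sum>u<a. A $$ (i div b, u) * C $$ (u, j div b)) * (\<Sum>v<b. B $$ (i mod b, v) * D $$ (v, j mod b))"
    by (simp add: sum_product mult_ac)
  also have "\<dots> = kron (A * C) (B * D) $$ (i,j)"
    using A B C D ij div_less_mult[OF ij(1)] div_less_mult[OF ij(2)] mod_less_mult[OF ij(1)] mod_less_mult[OF ij(2)]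
    by (auto simp: scalar_prod_def lessThan_atLeast0 intro!: sum.cong)
  finally show "(kron A B * kron C D) $$ (i,j) = kron (A * C) (B * D) $$ (i,j)" .
qed (use A B C D in auto)

lemma kron_one: "kron (1\<^sub>m a) (1\<^sub>m b) = 1\<^sub>m (a*b)"
proof (rule eq_matI)
  fix i j assume "i < dim_row (1\<^sub>m (a * b))" "j < dim_col (1\<^sub>m (a * b))"
  then have ij: "i < a*b" "j < a*b" by auto
  have "(i div b = j div b \<and> i mod b = j mod b) = (i = j)"
    by (metis div_mult_mod_eq)
  then show "kron (1\<^sub>m a) (1\<^sub>m b) $$ (i, j) = 1\<^sub>m (a * b) $$ (i, j)"
    using ij div_less_mult[OF ij(1)] div_less_mult[OF ij(2)] mod_less_mult[OF ij(1)] mod_less_mult[OF ij(2)]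
    by auto
qed auto

lemma dag_kron: "dag (kron A B) = kron (dag A) (dag B)"
proof (rule eq_matI)
  fix i j assume ij: "i < dim_row (kron (dag A) (dag B))" "j < dim_col (kron (dag A) (dag B))"
  then have ij': "i < dim_col A * dim_col B" "j < dim_row A * dim_row B" by auto
  show "dag (kron A B) $$ (i, j) = kron (dag A) (dag B) $$ (i, j)"
    using ij' div_less_mult[OF ij'(1)] div_less_mult[OF ij'(2)] mod_less_mult[OF ij'(1)] mod_less_mult[OF ij'(2)]
    by auto
qed auto

lemma kron_smult_left: "kron (c \<cdot>\<^sub>m A) B = c \<cdot>\<^sub>m kron A B"
proof (rule eq_matI)
  fix i j assume ij: "i < dim_row (c \<cdot>\<^sub>m kron A B)" "j < dim_col (c \<cdot>\<^sub>m kron A B)"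
  then have ij': "i < dim_row A * dim_row B" "j < dim_col A * dim_col B" by auto
  show "kron (c \<cdot>\<^sub>m A) B $$ (i, j) = (c \<cdot>\<^sub>m kron A B) $$ (i, j)"
    using ij' div_less_mult[OF ij'(1)] div_less_mult[OF ij'(2)] by auto
qed auto

lemma kron_smult_right: "kron A (c \<cdot>\<^sub>m B) = c \<cdot>\<^sub>m kron A B"
proof (rule eq_matI)
  fix i j assume ij: "i < dim_row (c \<cdot>\<^sub>m kron A B)" "j < dim_col (c \<cdot>\<^sub>m kron A B)"
  then have ij': "i < dim_row A * dim_row B" "j < dim_col A * dim_col B" by auto
  show "kron A (c \<cdot>\<^sub>m B) $$ (i, j) = (c \<cdot>\<^sub>m kron A B) $$ (i, j)"
    using ij' mod_less_mult[OF ij'(1)] mod_less_mult[OF ij'(2)] by auto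
qed auto

lemma kron_msum_left: assumes "\<And>k. k \<in> I \<Longrightarrow> f k \<in> carrier_mat a a" "B \<in> carrier_mat b b"
  shows "kron (msum a I f) B = msum (a*b) I (\<lambda>k. kron (f k) B)"
proof (rule eq_matI)
  fix i j assume "i < dim_row (msum (a*b) I (\<lambda>k. kron (f k) B))" "j < dim_col (msum (a*b) I (\<lambda>k. kron (f k) B))"
  then have ij: "i < a*b" "j < a*b" by auto
  have "kron (f k) B $$ (i,j) = f k $$ (i div b, j div b) * B $$ (i mod b, j mod b)" if "k \<in> I" for k
    using assms(1)[OF that] assms(2) ij by auto
  then show "kron (msum a I f) B $$ (i, j) = msum (a * b) I (\<lambda>k. kron (f k) B) $$ (i, j)"
    using ij assms(2) div_less_mult[OF ij(1)] div_less_mult[OF ij(2)] by (auto simp: sum_distrib_right)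
qed (use assms in auto)

lemma kron_msum_right: assumes "\<And>k. k \<in> I \<Longrightarrow> f k \<in> carrier_mat b b" "A \<in> carrier_mat a a"
  shows "kron A (msum b I f) = msum (a*b) I (\<lambda>k. kron A (f k))"
proof (rule eq_matI)
  fix i j assume "i < dim_row (msum (a*b) I (\<lambda>k. kron A (f k)))" "j < dim_col (msum (a*b) I (\<lambda>k. kron A (f k)))"
  then have ij: "i < a*b" "j < a*b" by auto
  have "kron A (f k) $$ (i,j) = A $$ (i div b, j div b) * f k $$ (i mod b, j mod b)" if "k \<in> I" for k
    using assms(1)[OF that] assms(2) ij by auto
  then show "kron A (msum b I f) $$ (i, j) = msum (a * b) I (\<lambda>k. kron A (f k)) $$ (i, j)"
    using ij assms(2) mod_less_mult[OF ij(1)] mod_less_mult[OF ij(2)] by (auto simp: sum_distrib_left)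
qed (use assms in auto)

lemma mtrace_kron: assumes "A \<in> carrier_mat a a" "B \<in> carrier_mat b b"
  shows "mtrace (kron A B) = mtrace A * mtrace B"
proof (cases "b = 0")
  case True then show ?thesis using assms by (auto simp: mtrace_def)
next
  case False
  then have b0: "0 < b" by auto
  have "mtrace (kron A B) = (\<Sum>k<a*b. A $$ (k div b, k div b) * B $$ (k mod b, k mod b))"
    using assms by (auto simp: mtrace_def intro!: sum.cong)
  also have "\<dots> = (\<Sum>u<a. \<Sum>v<b. A $$ (u,u) * B $$ (v,v))"
    by (rule sum_mult_split'[OF b0, where g = "\<lambda>u v. A $$ (u,u) * B $$ (v,v)"])
  also have "\<dots> = mtrace A * mtrace B" using assms by (auto simp: mtrace_def sum_product)
  finally show ?thesis .
qed

lemma smult_one_mat[simp]: "(1::'a::monoid_mult) \<cdot>\<^sub>m A = A"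
  by (rule eq_matI, auto)

lemma smult_smult: "a \<cdot>\<^sub>m (b \<cdot>\<^sub>m A) = (a * b :: 'a :: semigroup_mult) \<cdot>\<^sub>m A"
  by (rule eq_matI, auto simp: mult.assoc)

definition prodI :: "nat \<Rightarrow> (nat \<Rightarrow> complex mat) \<Rightarrow> nat list \<Rightarrow> complex mat" where
  "prodI N F ps = foldr (\<lambda>p M. F p * M) ps (1\<^sub>m N)"

lemma prodI_Nil[simp]: "prodI N F [] = 1\<^sub>m N" unfolding prodI_def by simp

lemma prodI_Cons[simp]: "prodI N F (p # ps) = F p * prodI N F ps" unfolding prodI_def by simp

lemma prodI_carrier[simp]: "(\<And>p. p \<in> set ps \<Longrightarrow> F p \<in> carrier_mat N N) \<Longrightarrow> prodI N F ps \<in> carrier_mat N N"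
proof (induction ps)
  case (Cons a ps)
  then have "prodI N F ps \<in> carrier_mat N N" "F a \<in> carrier_mat N N" by auto
  then show ?case by simp
qed simp

lemma prodI_append: "(\<And>p. p \<in> set (xs @ ys) \<Longrightarrow> F p \<in> carrier_mat N N) \<Longrightarrow>
   prodI N F (xs @ ys) = prodI N F xs * prodI N F ys"
proof (induction xs)
  case Nil
  have "prodI N F ys \<in> carrier_mat N N" using Nil by (intro prodI_carrier) auto
  then show ?case by simp
next
  case (Cons a xs)
  have "F a * prodI N F (xs @ ys) = F a * (prodI N F xs * prodI N F ys)" using Cons by auto
  also have "\<dots> = F a * prodI N F xs * prodI N F ys"
    by (rule assoc_mult_mat[symmetric, of _ N N _ N _ N]) (use Cons.prems in auto)
  finally show ?case by simp
qed

lemma prodI_cong: "(\<And>p. p \<in> set ps \<Longrightarrow> F p = G p) \<Longrightarrow> prodI N F ps = prodI N G ps"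
  by (induction ps) auto

lemma prodI_smult: "(\<And>p. p \<in> set ps \<Longrightarrow> F p \<in> carrier_mat N N) \<Longrightarrow>
  prodI N (\<lambda>p. c p \<cdot>\<^sub>m F p) ps = prod_list (map c ps) \<cdot>\<^sub>m prodI N F ps"
proof (induction ps)
  case (Cons a ps)
  then have *: "prodI N F ps \<in> carrier_mat N N" "F a \<in> carrier_mat N N" by auto
  have "prodI N (\<lambda>p. c p \<cdot>\<^sub>m F p) (a # ps) = (c a \<cdot>\<^sub>m F a) * (prod_list (map c ps) \<cdot>\<^sub>m prodI N F ps)"
    using Cons by auto
  also have "\<dots> = (c a * prod_list (map c ps)) \<cdot>\<^sub>m (F a * prodI N F ps)"
    using * by (simp add: mult_smult_assoc_mat[OF *(2) smult_carrier_mat[OF *(1)]] mult_smult_distrib[OF *(2) *(1)] smult_smult)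
  finally show ?case by simp
qed simp

lemma prodI_commute: assumes "X \<in> carrier_mat N N" "\<And>p. p \<in> set ps \<Longrightarrow> F p \<in> carrier_mat N N"
  "\<And>p. p \<in> set ps \<Longrightarrow> X * F p = F p * X"
  shows "X * prodI N F ps = prodI N F ps * X"
  using assms(2,3)
proof (induction ps)
  case (Cons a ps)
  then have *: "prodI N F ps \<in> carrier_mat N N" "F a \<in> carrier_mat N N" by auto
  have "X * (F a * prodI N F ps) = (X * F a) * prodI N F ps" using * assms(1) by simp
  also have "\<dots> = (F a * X) * prodI N F ps" using Cons by simp
  also have "\<dots> = F a * (X * prodI N F ps)" using * assms(1) by (simp add: assoc_mult_mat[OF *(2) assms(1) *(1)])
  also have "\<dots> = F a * (prodI N F ps * X)" using Cons by simp
  also have "\<dots> = (F a * prodI N F ps) * X" using * assms(1) by simp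
  finally show ?case by simp
qed (use assms in simp)

lemma prodI_rev: assumes "\<And>p. p \<in> set ps \<Longrightarrow> F p \<in> carrier_mat N N"
  "\<And>p q. p \<in> set ps \<Longrightarrow> q \<in> set ps \<Longrightarrow> F p * F q = F q * F p"
  shows "prodI N F (rev ps) = prodI N F ps"
  using assms
proof (induction ps)
  case (Cons a ps)
  then have *: "prodI N F ps \<in> carrier_mat N N" "F a \<in> carrier_mat N N" by auto
  have "prodI N F (rev (a # ps)) = prodI N F (rev ps @ [a])" by simp
  also have "\<dots> = prodI N F (rev ps) * prodI N F [a]"
    by (rule prodI_append) (use Cons.prems in auto)
  also have "\<dots> = prodI N F ps * F a" using Cons * by (simp add: right_mult_one_mat[OF *(2)])
  also have "\<dots> = F a * prodI N F ps"
    by (rule prodI_commute[symmetric]) (use Cons.prems in auto)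
  finally show ?case by simp
qed simp

lemma dag_prodI: "(\<And>p. p \<in> set ps \<Longrightarrow> F p \<in> carrier_mat N N) \<Longrightarrow>
   dag (prodI N F ps) = prodI N (\<lambda>p. dag (F p)) (rev ps)"
proof (induction ps)
  case (Cons a ps)
  then have *: "prodI N F ps \<in> carrier_mat N N" "F a \<in> carrier_mat N N" by auto
  have "dag (prodI N F (a # ps)) = dag (prodI N F ps) * dag (F a)"
    using * by (simp add: dag_mult)
  also have "\<dots> = prodI N (\<lambda>p. dag (F p)) (rev ps) * prodI N (\<lambda>p. dag (F p)) [a]"
    using Cons * by (simp add: right_mult_one_mat[of "dag (F a)" N N])
  also have "\<dots> = prodI N (\<lambda>p. dag (F p)) (rev ps @ [a])"
    by (rule prodI_append[symmetric]) (use Cons.prems in auto)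
  also have "\<dots> = prodI N (\<lambda>p. dag (F p)) (rev (a # ps))" by simp
  finally show ?case .
qed simp

lemma prodI_hermitian: assumes "\<And>p. p \<in> set ps \<Longrightarrow> F p \<in> carrier_mat N N"
  "\<And>p q. p \<in> set ps \<Longrightarrow> q \<in> set ps \<Longrightarrow> F p * F q = F q * F p"
  "\<And>p. p \<in> set ps \<Longrightarrow> dag (F p) = F p"
  shows "dag (prodI N F ps) = prodI N F ps"
proof -
  have "dag (prodI N F ps) = prodI N (\<lambda>p. dag (F p)) (rev ps)" by (rule dag_prodI) (use assms in auto)
  also have "\<dots> = prodI N F (rev ps)" by (rule prodI_cong) (use assms in auto)
  also have "\<dots> = prodI N F ps" by (rule prodI_rev) (use assms in auto)
  finally show ?thesis .
qed

lemma prodI_eigen: assumes "P \<in> carrier_mat N N" "\<And>p. p \<in> set ps \<Longrightarrow> F p \<in> carrier_mat N N"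
  "\<And>p. p \<in> set ps \<Longrightarrow> F p * P = c p \<cdot>\<^sub>m P"
  shows "prodI N F ps * P = prod_list (map c ps) \<cdot>\<^sub>m P"
  using assms(2,3)
proof (induction ps)
  case (Cons a ps)
  then have *: "prodI N F ps \<in> carrier_mat N N" "F a \<in> carrier_mat N N" by auto
  have "prodI N F (a # ps) * P = F a * (prodI N F ps * P)" using * assms(1) by simp
  also have "\<dots> = F a * (prod_list (map c ps) \<cdot>\<^sub>m P)" using Cons by simp
  also have "\<dots> = prod_list (map c ps) \<cdot>\<^sub>m (F a * P)" using * assms(1) by (simp add: mult_smult_distrib)
  also have "\<dots> = prod_list (map c ps) \<cdot>\<^sub>m (c a \<cdot>\<^sub>m P)" using Cons by simp
  finally show ?case by (simp add: smult_smult mult.commute)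
qed (use assms in simp)

lemma prodI_eigen_one: assumes "X \<in> carrier_mat N N" "\<And>p. p \<in> set ps \<Longrightarrow> F p \<in> carrier_mat N N"
  "\<And>p. p \<in> set ps \<Longrightarrow> X * F p = F p * X" "p0 \<in> set ps" "X * F p0 = c \<cdot>\<^sub>m F p0"
  shows "X * prodI N F ps = c \<cdot>\<^sub>m prodI N F ps"
  using assms(2-4)
proof (induction ps)
  case (Cons a ps)
  then have *: "prodI N F ps \<in> carrier_mat N N" "F a \<in> carrier_mat N N" by auto
  show ?case
  proof (cases "a = p0")
    case True
    have "X * prodI N F (a # ps) = (X * F a) * prodI N F ps" using * assms(1) by simp
    also have "\<dots> = c \<cdot>\<^sub>m (F a * prodI N F ps)" using True assms(5) * by (simp add: mult_smult_assoc_mat)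
    finally show ?thesis by simp
  next
    case False
    then have "p0 \<in> set ps" using Cons by auto
    then have IH: "X * prodI N F ps = c \<cdot>\<^sub>m prodI N F ps" using Cons by auto
    have "X * prodI N F (a # ps) = (X * F a) * prodI N F ps" using * assms(1) by simp
    also have "\<dots> = (F a * X) * prodI N F ps" using Cons by simp
    also have "\<dots> = F a * (X * prodI N F ps)" using * assms(1) by (simp add: assoc_mult_mat[OF *(2) assms(1) *(1)])
    also have "\<dots> = c \<cdot>\<^sub>m (F a * prodI N F ps)" using IH * by (simp add: mult_smult_distrib)
    finally show ?thesis by simp
  qed
qed simp

lemma kron_prodI: assumes "\<And>p. p \<in> set ps \<Longrightarrow> F p \<in> carrier_mat a a" "\<And>p. p \<in> set ps \<Longrightarrow> G p \<in> carrier_mat b b"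
  shows "kron (prodI a F ps) (prodI b G ps) = prodI (a*b) (\<lambda>p. kron (F p) (G p)) ps"
  using assms
proof (induction ps)
  case Nil then show ?case by (simp add: kron_one)
next
  case (Cons p ps)
  then have c: "F p \<in> carrier_mat a a" "G p \<in> carrier_mat b b" "prodI a F ps \<in> carrier_mat a a" "prodI b G ps \<in> carrier_mat b b"
    by auto
  have "kron (F p * prodI a F ps) (G p * prodI b G ps) = kron (F p) (G p) * kron (prodI a F ps) (prodI b G ps)"
    by (rule kron_mult[symmetric, OF c(1,3,2,4)])
  then show ?case using Cons by simp
qed


definition bs :: "nat \<Rightarrow> bool list set" where "bs m = {x. length x = m}"

lemma bitstrings_bs: "bitstrings n = bs (2 * n)" unfolding bitstrings_def bs_def by simp

lemma finite_bs[simp]: "finite (bs m)"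
proof -
  have "bs m = {xs. set xs \<subseteq> (UNIV::bool set) \<and> length xs = m}" unfolding bs_def by auto
  then show ?thesis using finite_lists_length_eq[of "UNIV::bool set" m] by simp
qed

lemma bs_Suc: "bs (Suc m) = (\<lambda>(y,b). y @ [b]) ` (bs m \<times> UNIV)"
proof
  show "bs (Suc m) \<subseteq> (\<lambda>(y,b). y @ [b]) ` (bs m \<times> UNIV)"
  proof
    fix x assume "x \<in> bs (Suc m)"
    then have "length x = Suc m" unfolding bs_def by auto
    then have "x = butlast x @ [last x]" "butlast x \<in> bs m"
      by (auto simp: bs_def intro!: append_butlast_last_id[symmetric]) 
    then show "x \<in> (\<lambda>(y,b). y @ [b]) ` (bs m \<times> UNIV)" by (auto intro!: image_eqI[of _ _ "(butlast x, last x)"])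
  qed
qed (auto simp: bs_def)

lemma inj_snoc: "inj_on (\<lambda>(y,b). y @ [b]) A"
  by (auto simp: inj_on_def)

lemma sum_bs_Suc: "(\<Sum>x\<in>bs (Suc m). f x) = (\<Sum>y\<in>bs m. f (y @ [False]) + f (y @ [True]))"
proof -
  have "(\<Sum>x\<in>bs (Suc m). f x) = (\<Sum>(y,b)\<in>bs m \<times> UNIV. f (y @ [b]))"
    unfolding bs_Suc by (subst sum.reindex[OF inj_snoc]) (simp add: case_prod_unfold)
  also have "\<dots> = (\<Sum>y\<in>bs m. \<Sum>b\<in>UNIV. f (y @ [b]))"
    by (rule sum.cartesian_product[symmetric])
  also have "\<dots> = (\<Sum>y\<in>bs m. f (y @ [False]) + f (y @ [True]))"
    by (simp add: UNIV_bool add.commute)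
  finally show ?thesis .
qed

lemma msum_bs_Suc: "msum N (bs (Suc m)) f = msum N (bs m) (\<lambda>y. msum N UNIV (\<lambda>b. f (y @ [b])))"
  by (rule eq_matI) (auto simp: sum_bs_Suc UNIV_bool add.commute)

lemma msum_UNIV_bool: "f False \<in> carrier_mat N N \<Longrightarrow> f True \<in> carrier_mat N N \<Longrightarrow> msum N UNIV f = f False + f True"
  by (rule eq_matI) (auto simp: UNIV_bool add.commute)

lemma nth_snoc_upt: "p \<in> {1..m} \<Longrightarrow> (y @ [b]) ! (p - 1) = y ! (p - 1)" if "length y = m" for y
  using that by (auto simp: nth_append)

lemma scalar_expand:
  "(\<Sum>x\<in>bs m. \<Prod>p\<in>{1..m}. (if x ! (p - 1) then b p else a p)) = (\<Prod>p\<in>{1..m}. (a p + b p :: 'a :: comm_semiring_1))"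
proof (induction m)
  case 0 then show ?case by (simp add: bs_def)
next
  case (Suc m)
  have cg: "(\<Prod>p\<in>{1..m}. (if (y @ [c]) ! (p - 1) then b p else a p)) = (\<Prod>p\<in>{1..m}. (if y ! (p - 1) then b p else a p))"
    if "y \<in> bs m" for y c
    by (rule prod.cong) (use that in \<open>auto simp: bs_def nth_append\<close>)
  have last: "(y @ [c]) ! (Suc m - 1) = c" if "y \<in> bs m" for y c
    using that by (auto simp: bs_def nth_append)
  have "(\<Sum>x\<in>bs (Suc m). \<Prod>p\<in>{1..Suc m}. (if x ! (p - 1) then b p else a p))
     = (\<Sum>y\<in>bs m. (\<Prod>p\<in>{1..m}. (if y ! (p - 1) then b p else a p)) * (a (Suc m) + b (Suc m)))"
    unfolding sum_bs_Suc
  proof (rule sum.cong[OF refl])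
    fix y assume y: "y \<in> bs m"
    have step: "(\<Prod>p\<in>{1..Suc m}. (if (y @ [c]) ! (p - 1) then b p else a p)) =
       (\<Prod>p\<in>{1..m}. (if y ! (p - 1) then b p else a p)) * (if c then b (Suc m) else a (Suc m))" for c
    proof -
      have "(\<Prod>p\<in>{1..Suc m}. (if (y @ [c]) ! (p - 1) then b p else a p)) =
       (\<Prod>p\<in>{1..m}. (if (y @ [c]) ! (p - 1) then b p else a p)) * (if (y @ [c]) ! (Suc m - 1) then b (Suc m) else a (Suc m))"
        by (rule prod.cl_ivl_Suc[THEN trans]) simp
      then show ?thesis unfolding cg[OF y] last[OF y] .
    qed
    show "(\<Prod>p\<in>{1..Suc m}. (if (y @ [False]) ! (p - 1) then b p else a p)) + (\<Prod>p\<in>{1..Suc m}. (if (y @ [True]) ! (p - 1) then b p else a p))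
      = (\<Prod>p\<in>{1..m}. (if y ! (p - 1) then b p else a p)) * (a (Suc m) + b (Suc m))"
      unfolding step by (simp add: algebra_simps)
  qed
  also have "\<dots> = (\<Sum>y\<in>bs m. (\<Prod>p\<in>{1..m}. (if y ! (p - 1) then b p else a p))) * (a (Suc m) + b (Suc m))"
    by (rule sum_distrib_right[symmetric])
  also have "\<dots> = (\<Prod>p\<in>{1..m}. (a p + b p)) * (a (Suc m) + b (Suc m))"
    using Suc.IH by simp
  also have "\<dots> = (\<Prod>p\<in>{1..Suc m}. (a p + b p))"
    by (simp add: prod.cl_ivl_Suc)
  finally show ?case .
qed

lemma upt_Suc_snoc: "[1..<Suc m + 1] = [1..<m+1] @ [Suc m]" by simp

lemma matrix_expand:
  assumes "\<And>p. p \<in> {1..m} \<Longrightarrow> F0 p \<in> carrier_mat N N" "\<And>p. p \<in> {1..m} \<Longrightarrow> F1 p \<in> carrier_mat N N"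
  shows "prodI N (\<lambda>p. F0 p + F1 p) [1..<m+1] = msum N (bs m) (\<lambda>x. prodI N (\<lambda>p. if x ! (p - 1) then F1 p else F0 p) [1..<m+1])"
  using assms
proof (induction m)
  case 0 then show ?case by (auto simp: bs_def intro!: msum_delta[symmetric])
next
  case (Suc m)
  let ?G = "\<lambda>x. prodI N (\<lambda>p. if x ! (p - 1) then F1 p else F0 p) [1..<m+1]"
  have c0: "F0 (Suc m) \<in> carrier_mat N N" "F1 (Suc m) \<in> carrier_mat N N" using Suc.prems by auto
  have cG: "?G x \<in> carrier_mat N N" for x by (rule prodI_carrier) (use Suc.prems in auto)
  have IH: "prodI N (\<lambda>p. F0 p + F1 p) [1..<m+1] = msum N (bs m) ?G"
    by (rule Suc.IH) (use Suc.prems in auto)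
  have "prodI N (\<lambda>p. F0 p + F1 p) [1..<Suc m+1] = prodI N (\<lambda>p. F0 p + F1 p) [1..<m+1] * prodI N (\<lambda>p. F0 p + F1 p) [Suc m]"
    unfolding upt_Suc_snoc by (rule prodI_append) (use Suc.prems in auto)
  also have "\<dots> = msum N (bs m) ?G * (F0 (Suc m) + F1 (Suc m))"
    using IH c0 by simp
  also have "\<dots> = msum N (bs m) (\<lambda>y. ?G y * (F0 (Suc m) + F1 (Suc m)))"
    by (rule msum_mult_right) (use c0 cG in auto)
  also have "\<dots> = msum N (bs m) (\<lambda>y. ?G y * F0 (Suc m) + ?G y * F1 (Suc m))"
    by (rule msum_cong, rule mult_add_distrib_mat[OF cG c0(1) c0(2)])
  also have "\<dots> = msum N (bs (Suc m)) (\<lambda>x. prodI N (\<lambda>p. if x ! (p - 1) then F1 p else F0 p) [1..<Suc m+1])"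
    unfolding msum_bs_Suc
  proof (rule msum_cong)
    fix y assume y: "y \<in> bs m"
    have e: "prodI N (\<lambda>p. if (y @ [c]) ! (p - 1) then F1 p else F0 p) [1..<Suc m+1] = ?G y * (if c then F1 (Suc m) else F0 (Suc m))" for c
    proof -
      have "prodI N (\<lambda>p. if (y @ [c]) ! (p - 1) then F1 p else F0 p) [1..<Suc m+1] =
        prodI N (\<lambda>p. if (y @ [c]) ! (p - 1) then F1 p else F0 p) [1..<m+1] * prodI N (\<lambda>p. if (y @ [c]) ! (p - 1) then F1 p else F0 p) [Suc m]"
        unfolding upt_Suc_snoc by (rule prodI_append) (use Suc.prems in auto)
      also have "prodI N (\<lambda>p. if (y @ [c]) ! (p - 1) then F1 p else F0 p) [1..<m+1] = ?G y"
        by (rule prodI_cong) (use y in \<open>auto simp: bs_def nth_append\<close>)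
      also have "prodI N (\<lambda>p. if (y @ [c]) ! (p - 1) then F1 p else F0 p) [Suc m] = (if c then F1 (Suc m) else F0 (Suc m))"
        using y c0 by (auto simp: bs_def nth_append)
      finally show ?thesis .
    qed
    show "?G y * F0 (Suc m) + ?G y * F1 (Suc m) =
      msum N UNIV (\<lambda>b. prodI N (\<lambda>p. if (y @ [b]) ! (p - 1) then F1 p else F0 p) [1..<Suc m + 1])"
      unfolding e using mult_carrier_mat[OF cG c0(1)] mult_carrier_mat[OF cG c0(2)] by (subst msum_UNIV_bool) auto
  qed
  finally show ?case .
qed


lemma occ_bit: "occ i k = bit i k" unfolding occ_def by (simp add: bit_iff_odd)

lemma occ_flip: "occ (flip_bit j c) l = (if l = j then \<not> occ c l else occ c l)"
  unfolding occ_bit by (auto simp: bit_flip_bit_iff)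

lemma flip_flip[simp]: "flip_bit j (flip_bit j (c::nat)) = c"
  by (rule bit_eqI) (auto simp: bit_flip_bit_iff)

lemma flip_comm: "flip_bit j (flip_bit k (c::nat)) = flip_bit k (flip_bit j c)"
  by (rule bit_eqI) (auto simp: bit_flip_bit_iff)

lemma flip_eq_if: "flip_bit k (c::nat) = (if occ c k then c - 2^k else c + 2^k)"
proof (cases "bit c k")
  case True
  have "c = set_bit k (unset_bit k c)" using True by (rule_tac bit_eqI) (auto simp: bit_simps)
  also have "\<dots> = unset_bit k c + 2^k" by (simp add: set_bit_eq bit_simps)
  finally have "c - 2^k = unset_bit k c" by simp
  then show ?thesis using True unfolding occ_bit flip_bit_eq_if by simp
next
  case False
  then show ?thesis unfolding occ_bit flip_bit_eq_if by (simp add: set_bit_eq)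
qed

lemma flip_less: assumes "(c::nat) < 2^n" "k < n" shows "flip_bit k c < 2^n"
proof -
  have tc: "take_bit n c = c" using assms by (simp add: take_bit_nat_eq_self_iff)
  have "take_bit n (flip_bit k c) = flip_bit k c"
  proof (rule bit_eqI)
    fix m
    have "bit c m \<Longrightarrow> m < n" using tc by (metis bit_take_bit_iff)
    then show "bit (take_bit n (flip_bit k c)) m = bit (flip_bit k c) m"
      using assms by (auto simp: bit_take_bit_iff bit_flip_bit_iff)
  qed
  then show ?thesis by (simp add: take_bit_nat_eq_self_iff)
qed

lemma flip_eq_iff: "(r = flip_bit k c) = (c = flip_bit k (r::nat))"
  by auto

definition sig :: "nat \<Rightarrow> nat \<Rightarrow> complex" where
  "sig k c = (- 1) ^ card {l. l < k \<and> occ c l}"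

lemma sig_sq[simp]: "sig k c * sig k c = 1"
  unfolding sig_def by (simp add: power_mult_distrib[symmetric])

lemma cnj_sig[simp]: "cnj (sig k c) = sig k c"
  unfolding sig_def by simp

lemma sig_flip: "sig k (flip_bit j c) = (if j < k then - sig k c else sig k c)"
proof -
  let ?S = "{l. l < k \<and> occ c l}"
  let ?T = "{l. l < k \<and> occ (flip_bit j c) l}"
  have fin: "finite ?S" "finite ?T" by auto
  show ?thesis
  proof (cases "j < k")
    case False
    then have "?T = ?S" by (auto simp: occ_flip)
    then show ?thesis using False unfolding sig_def by simp
  next
    case True
    show ?thesis
    proof (cases "occ c j")
      case True': True
      then have "?S = insert j ?T" "j \<notin> ?T" using True by (auto simp: occ_flip)
      then have "card ?S = Suc (card ?T)" using fin by simp
      then show ?thesis using True unfolding sig_def by simp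
    next
      case False': False
      then have "?T = insert j ?S" "j \<notin> ?S" using True by (auto simp: occ_flip)
      then have "card ?T = Suc (card ?S)" using fin by simp
      then show ?thesis using True unfolding sig_def by simp
    qed
  qed
qed

definition gp :: "nat \<Rightarrow> (nat \<Rightarrow> nat) \<Rightarrow> (nat \<Rightarrow> complex) \<Rightarrow> complex mat" where
  "gp N f \<phi> = mat N N (\<lambda>(r,c). if r = f c then \<phi> c else 0)"

lemma gp_carrier[simp]: "gp N f \<phi> \<in> carrier_mat N N" unfolding gp_def by auto

lemma gp_dims[simp]: "dim_row (gp N f \<phi>) = N" "dim_col (gp N f \<phi>) = N" unfolding gp_def by auto

lemma gp_index[simp]: "r < N \<Longrightarrow> c < N \<Longrightarrow> gp N f \<phi> $$ (r,c) = (if r = f c then \<phi> c else 0)"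
  unfolding gp_def by auto

lemma gp_mult: assumes "\<And>c. c < N \<Longrightarrow> g c < N"
  shows "gp N f \<phi> * gp N g \<psi> = gp N (\<lambda>c. f (g c)) (\<lambda>c. \<phi> (g c) * \<psi> c)"
proof (rule eq_matI)
  fix r c assume "r < dim_row (gp N (\<lambda>c. f (g c)) (\<lambda>c. \<phi> (g c) * \<psi> c))" "c < dim_col (gp N (\<lambda>c. f (g c)) (\<lambda>c. \<phi> (g c) * \<psi> c))"
  then have rc: "r < N" "c < N" by auto
  have "(gp N f \<phi> * gp N g \<psi>) $$ (r,c) = (\<Sum>l\<in>{0..<N}. (if r = f l then \<phi> l else 0) * (if l = g c then \<psi> c else 0))"
    using rc by (auto simp: scalar_prod_def intro!: sum.cong)
  also have "\<dots> = (\<Sum>l\<in>{0..<N}. if l = g c then (if r = f (g c) then \<phi> (g c) * \<psi> c else 0) else 0)"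
    by (rule sum.cong) auto
  also have "\<dots> = (if r = f (g c) then \<phi> (g c) * \<psi> c else 0)"
    using assms[OF rc(2)] by (subst sum.delta) auto
  finally show "(gp N f \<phi> * gp N g \<psi>) $$ (r,c) = gp N (\<lambda>c. f (g c)) (\<lambda>c. \<phi> (g c) * \<psi> c) $$ (r,c)"
    using rc by simp
qed auto

lemma gp_dag: assumes "\<And>c. c < N \<Longrightarrow> f c < N" "\<And>c. f (f c) = c"
  shows "dag (gp N f \<phi>) = gp N f (\<lambda>c. cnj (\<phi> (f c)))"
proof (rule eq_matI)
  fix r c assume "r < dim_row (gp N f (\<lambda>c. cnj (\<phi> (f c))))" "c < dim_col (gp N f (\<lambda>c. cnj (\<phi> (f c))))"
  then have rc: "r < N" "c < N" by auto
  have "(c = f r) = (r = f c)" using assms(2) by metis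
  then show "dag (gp N f \<phi>) $$ (r,c) = gp N f (\<lambda>c. cnj (\<phi> (f c))) $$ (r,c)"
    using rc assms(2)[of c] by auto
qed auto

lemma gp_one: assumes "\<And>c. c < N \<Longrightarrow> f c = c" "\<And>c. c < N \<Longrightarrow> \<phi> c = 1"
  shows "gp N f \<phi> = 1\<^sub>m N"
  by (rule eq_matI) (use assms in auto)

section \<open>Majorana operators as generalized permutations\<close>

definition mk :: "nat \<Rightarrow> nat" where "mk p = (p - 1) div 2"

definition phi :: "nat \<Rightarrow> nat \<Rightarrow> complex" where
  "phi p c = (if odd p then sig (mk p) c else (if occ c (mk p) then - \<i> else \<i>) * sig (mk p) c)"

lemma mk_less: "p \<in> {1..2*n} \<Longrightarrow> mk p < n"
  unfolding mk_def by auto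

lemma annih_index: "r < 2^n \<Longrightarrow> c < 2^n \<Longrightarrow> annih n k $$ (r,c) = (if occ c k \<and> r = flip_bit k c then sig k c else 0)"
  unfolding annih_def sig_def by (auto simp: flip_eq_if)

lemma annih_carrier[simp]: "annih n k \<in> carrier_mat (2^n) (2^n)"
  unfolding annih_def by auto

lemma annih_dims[simp]: "dim_row (annih n k) = 2^n" "dim_col (annih n k) = 2^n"
  unfolding annih_def by auto

lemma majorana_gp: assumes p: "p \<in> {1..2*n}"
  shows "majorana n p = gp (2^n) (flip_bit (mk p)) (phi p)"
proof (rule eq_matI)
  let ?k = "mk p"
  fix r c assume "r < dim_row (gp (2^n) (flip_bit (mk p)) (phi p))" "c < dim_col (gp (2^n) (flip_bit (mk p)) (phi p))"
  then have rc: "r < 2^n" "c < 2^n" by auto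
  have a: "annih n ?k $$ (r,c) = (if occ c ?k \<and> r = flip_bit ?k c then sig ?k c else 0)"
    using rc by (rule annih_index)
  have b: "dag (annih n ?k) $$ (r,c) = (if \<not> occ c ?k \<and> r = flip_bit ?k c then sig ?k c else 0)"
  proof -
    have "dag (annih n ?k) $$ (r,c) = cnj (annih n ?k $$ (c,r))" using rc by simp
    also have "\<dots> = (if occ r ?k \<and> c = flip_bit ?k r then sig ?k r else 0)"
      using rc by (simp add: annih_index)
    also have "\<dots> = (if \<not> occ c ?k \<and> r = flip_bit ?k c then sig ?k c else 0)"
    proof (cases "r = flip_bit ?k c")
      case True
      then show ?thesis by (auto simp: occ_flip sig_flip)
    next
      case False
      then have "c \<noteq> flip_bit ?k r" by auto
      then show ?thesis using False by auto
    qed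
    finally show ?thesis .
  qed
  show "majorana n p $$ (r,c) = gp (2^n) (flip_bit (mk p)) (phi p) $$ (r,c)"
    using rc a b unfolding majorana_def Let_def mk_def[symmetric] phi_def
    by (auto simp: algebra_simps)
qed (auto simp: majorana_def Let_def)


lemma majorana_carrier[simp]: "majorana n p \<in> carrier_mat (2^n) (2^n)"
  unfolding majorana_def Let_def by auto

lemma majorana_dims[simp]: "dim_row (majorana n p) = 2^n" "dim_col (majorana n p) = 2^n"
  using majorana_carrier[of n p] by (auto simp del: majorana_carrier)

lemma phi_flip_self: "phi p (flip_bit (mk p) c) = (if odd p then phi p c else - phi p c)"
  unfolding phi_def by (auto simp: occ_flip sig_flip)

lemma phi_flip_other: "mk q \<noteq> mk p \<Longrightarrow> phi p (flip_bit (mk q) c) = (if mk q < mk p then - phi p c else phi p c)"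
  unfolding phi_def by (auto simp: occ_flip sig_flip)

lemma phi_sq: "phi p (flip_bit (mk p) c) * phi p c = 1"
proof (cases "odd p")
  case True then show ?thesis by (simp add: phi_flip_self phi_def sig_flip)
next
  case False
  have "- ((if occ c (mk p) then - \<i> else \<i>) * (if occ c (mk p) then - \<i> else \<i>)) = (1::complex)"
    by auto
  then show ?thesis using False unfolding phi_flip_self by (simp add: phi_def algebra_simps)
qed

lemma cnj_phi: "cnj (phi p (flip_bit (mk p) c)) = phi p c"
  unfolding phi_flip_self by (auto simp: phi_def)

lemma flip_in: "p \<in> {1..2*n} \<Longrightarrow> (c::nat) < 2^n \<Longrightarrow> flip_bit (mk p) c < 2^n"
  by (rule flip_less, auto intro: mk_less)

lemma majorana_sq: assumes "p \<in> {1..2*n}" shows "majorana n p * majorana n p = 1\<^sub>m (2^n)"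
  unfolding majorana_gp[OF assms]
  by (subst gp_mult) (auto intro: flip_in[OF assms] gp_one simp: phi_sq)

lemma majorana_herm: assumes "p \<in> {1..2*n}" shows "dag (majorana n p) = majorana n p"
  unfolding majorana_gp[OF assms]
  by (subst gp_dag) (auto intro: flip_in[OF assms] simp: cnj_phi)

lemma gp_neg: "(-1) \<cdot>\<^sub>m gp N f \<phi> = gp N f (\<lambda>c. - \<phi> c)"
  by (rule eq_matI) auto

lemma gp_cong: "(\<And>c. c < N \<Longrightarrow> f c = g c) \<Longrightarrow> (\<And>c. c < N \<Longrightarrow> \<phi> c = \<psi> c) \<Longrightarrow> gp N f \<phi> = gp N g \<psi>"
  by (rule eq_matI) auto

lemma majorana_anti: assumes p: "p \<in> {1..2*n}" and q: "q \<in> {1..2*n}" and pq: "p \<noteq> q"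
  shows "majorana n p * majorana n q = (-1) \<cdot>\<^sub>m (majorana n q * majorana n p)"
proof -
  have key: "phi p (flip_bit (mk q) c) * phi q c = - (phi q (flip_bit (mk p) c) * phi p c)" for c
  proof (cases "mk p = mk q")
    case True
    then have "odd p \<noteq> odd q" using pq p q unfolding mk_def by simp presburger
    then show ?thesis using True unfolding phi_flip_self[of p, unfolded True] phi_flip_self[of q]
      by (cases "odd p") (auto simp: phi_def True algebra_simps sig_flip occ_flip)
  next
    case False
    then show ?thesis by (auto simp: phi_flip_other algebra_simps)
  qed
  show ?thesis
    unfolding majorana_gp[OF p] majorana_gp[OF q]
    apply (subst gp_mult, erule flip_in[OF q])
    apply (subst gp_mult, erule flip_in[OF p])
    apply (unfold gp_neg)
    apply (rule gp_cong)
    by (auto simp: flip_comm key)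
qed

lemma majorana_herm_all: "dag (majorana n p) = majorana n p \<or> p \<notin> {1..2*n}"
  using majorana_herm by blast


lemma cmon_prodI: "cmon n x = prodI (2^n) (\<lambda>p. if x ! (p - 1) then majorana n p else 1\<^sub>m (2^n)) [1..<2*n+1]"
  unfolding cmon_def prodI_def by simp

lemma cmon_carrier[simp]: "cmon n x \<in> carrier_mat (2^n) (2^n)"
  unfolding cmon_prodI by (rule prodI_carrier) auto

lemma hw_card: "length x = m \<Longrightarrow> hw x = card {p\<in>{1..m}. x ! (p - 1)}"
proof -
  assume l: "length x = m"
  have "hw x = card {i. i < m \<and> x ! i}" unfolding hw_def using l by (simp add: length_filter_conv_card)
  also have "\<dots> = card (Suc ` {i. i < m \<and> x ! i})" by (simp add: card_image)
  also have "Suc ` {i. i < m \<and> x ! i} = {p\<in>{1..m}. x ! (p - 1)}"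
  proof (rule Set.set_eqI)
    fix p show "p \<in> Suc ` {i. i < m \<and> x ! i} \<longleftrightarrow> p \<in> {p\<in>{1..m}. x ! (p - 1)}"
      by (cases p) auto
  qed
  finally show ?thesis .
qed

lemma prod_if_pow: "finite A \<Longrightarrow> (\<Prod>p\<in>A. if P p then (a::'a::comm_monoid_mult) else 1) = a ^ card {p\<in>A. P p}"
  by (simp add: prod.inter_filter[symmetric])

lemma prodI_anti: assumes "X \<in> carrier_mat N N" "\<And>p. p \<in> set ps \<Longrightarrow> F p \<in> carrier_mat N N"
  "\<And>p. p \<in> set ps \<Longrightarrow> X * F p = s p \<cdot>\<^sub>m (F p * X)"
  shows "X * prodI N F ps = prod_list (map s ps) \<cdot>\<^sub>m (prodI N F ps * X)"
  using assms(2,3)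
proof (induction ps)
  case (Cons a ps)
  then have *: "prodI N F ps \<in> carrier_mat N N" "F a \<in> carrier_mat N N" by auto
  have "X * (F a * prodI N F ps) = (X * F a) * prodI N F ps" using * assms(1) by simp
  also have "\<dots> = (s a \<cdot>\<^sub>m (F a * X)) * prodI N F ps" using Cons by simp
  also have "\<dots> = s a \<cdot>\<^sub>m (F a * (X * prodI N F ps))"
    using * assms(1) by (simp add: mult_smult_assoc_mat[OF mult_carrier_mat[OF *(2) assms(1)] *(1)] assoc_mult_mat[OF *(2) assms(1) *(1)])
  also have "\<dots> = s a \<cdot>\<^sub>m (F a * (prod_list (map s ps) \<cdot>\<^sub>m (prodI N F ps * X)))" using Cons by simp
  also have "\<dots> = (s a * prod_list (map s ps)) \<cdot>\<^sub>m ((F a * prodI N F ps) * X)"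
    using * assms(1) by (simp add: mult_smult_distrib[OF *(2) mult_carrier_mat[OF *(1) assms(1)]] smult_smult assoc_mult_mat[OF *(2) *(1) assms(1)])
  finally show ?case by simp
qed (use assms in simp)

lemma mtrace_anti_zero: assumes "X \<in> carrier_mat N N" "C \<in> carrier_mat N N" "X * X = 1\<^sub>m N"
  "X * C = (-1) \<cdot>\<^sub>m (C * X)"
  shows "mtrace C = 0"
proof -
  have "mtrace C = mtrace ((X * X) * C)" using assms(2,3) by simp
  also have "\<dots> = mtrace (X * (X * C))" by (simp add: assoc_mult_mat[OF assms(1) assms(1) assms(2)])
  also have "\<dots> = mtrace ((X * C) * X)" by (rule mtrace_mult_comm) (use assms in auto)
  also have "\<dots> = mtrace ((-1) \<cdot>\<^sub>m (C * (X * X)))"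
    using assms by (simp add: mult_smult_assoc_mat[OF mult_carrier_mat[OF assms(2) assms(1)] assms(1)] assoc_mult_mat[OF assms(2) assms(1) assms(1)])
  also have "\<dots> = - mtrace C" using assms by (simp add: mtrace_smult[of _ N])
  finally show ?thesis by simp
qed

lemma mtrace_cmon: assumes x: "x \<in> bitstrings n" "True \<in> set x"
  shows "mtrace (cmon n x) = 0"
proof -
  have lx: "length x = 2*n" using x unfolding bitstrings_def by auto
  define h where "h = hw x"
  have h: "h = card {p\<in>{1..2*n}. x ! (p - 1)}" unfolding h_def by (rule hw_card[OF lx])
  obtain q where q: "q \<in> {1..2*n}" and parity: "odd (card {p\<in>{1..2*n}. x ! (p - 1) \<and> p \<noteq> q})"
  proof (cases "even h")
    case True
    from x obtain i where i: "i < length x" "x ! i" by (metis in_set_conv_nth)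
    let ?q = "Suc i"
    have q: "?q \<in> {1..2*n}" using i lx by auto
    have "{p\<in>{1..2*n}. x ! (p - 1)} = insert ?q {p\<in>{1..2*n}. x ! (p - 1) \<and> p \<noteq> ?q}"
      using i q by auto
    then have "h = Suc (card {p\<in>{1..2*n}. x ! (p - 1) \<and> p \<noteq> ?q})" unfolding h by simp
    then have "odd (card {p\<in>{1..2*n}. x ! (p - 1) \<and> p \<noteq> ?q})" using True by simp
    then show ?thesis by (rule that[OF q])
  next
    case False
    have "\<exists>i<length x. \<not> x ! i"
    proof (rule ccontr)
      assume "\<not> ?thesis"
      then have all: "\<forall>i<length x. x ! i" by blast
      have "{p\<in>{1..2*n}. x ! (p - 1)} = {1..2*n}"
      proof (rule Set.set_eqI)
        fix p
        have "p \<in> {1..2*n} \<Longrightarrow> p - 1 < length x" using lx by auto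
        then show "p \<in> {p\<in>{1..2*n}. x ! (p - 1)} \<longleftrightarrow> p \<in> {1..2*n}" using all by auto
      qed
      then have "h = 2*n" unfolding h by simp
      then show False using False by simp
    qed
    then obtain i where i: "i < length x" "\<not> x ! i" by auto
    let ?q = "Suc i"
    have q: "?q \<in> {1..2*n}" using i lx by auto
    have "{p\<in>{1..2*n}. x ! (p - 1) \<and> p \<noteq> ?q} = {p\<in>{1..2*n}. x ! (p - 1)}" using i by auto
    then have "odd (card {p\<in>{1..2*n}. x ! (p - 1) \<and> p \<noteq> ?q})" using False unfolding h by simp
    then show ?thesis by (rule that[OF q])
  qed
  let ?F = "\<lambda>p. if x ! (p - 1) then majorana n p else 1\<^sub>m (2^n)"
  let ?s = "\<lambda>p. if x ! (p - 1) \<and> p \<noteq> q then (-1::complex) else 1"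
  have anti: "majorana n q * ?F p = ?s p \<cdot>\<^sub>m (?F p * majorana n q)" if "p \<in> set [1..<2*n+1]" for p
  proof -
    have p: "p \<in> {1..2*n}" using that by auto
    show ?thesis
    proof (cases "x ! (p - 1) \<and> p \<noteq> q")
      case True then show ?thesis using majorana_anti[OF q p] by auto
    next
      case False
      then show ?thesis by (cases "x ! (p-1)") auto
    qed
  qed
  have "majorana n q * cmon n x = prod_list (map ?s [1..<2*n+1]) \<cdot>\<^sub>m (cmon n x * majorana n q)"
    unfolding cmon_prodI by (rule prodI_anti[OF majorana_carrier _ anti]) auto
  also have "prod_list (map ?s [1..<2*n+1]) = (\<Prod>p\<in>{1..2*n}. ?s p)"
  proof -
    have eq: "set [1..<2*n+1] = {1..2*n}" by auto
    show ?thesis unfolding eq[symmetric] by (rule prod.distinct_set_conv_list[symmetric]) simp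
  qed
  also have "\<dots> = (-1) ^ card {p\<in>{1..2*n}. x ! (p - 1) \<and> p \<noteq> q}" by (rule prod_if_pow) simp
  also have "\<dots> = -1" using parity by simp
  finally have "majorana n q * cmon n x = (-1) \<cdot>\<^sub>m (cmon n x * majorana n q)" .
  then show ?thesis by (intro mtrace_anti_zero[OF majorana_carrier cmon_carrier majorana_sq[OF q]])
qed

lemma prodI_const_one: "prodI N (\<lambda>p. 1\<^sub>m N) ps = 1\<^sub>m N"
  by (induction ps) auto

lemma cmon_zero: assumes "x \<in> bitstrings n" "True \<notin> set x" shows "cmon n x = 1\<^sub>m (2^n)"
proof -
  have "cmon n x = prodI (2^n) (\<lambda>p. 1\<^sub>m (2^n)) [1..<2*n+1]"
    unfolding cmon_prodI
  proof (rule prodI_cong)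
    fix p assume "p \<in> set [1..<2*n+1]"
    then have "p - 1 < length x" using assms unfolding bitstrings_def by auto
    then have "\<not> x ! (p - 1)" using assms(2) by (metis nth_mem)
    then show "(if x ! (p - 1) then majorana n p else 1\<^sub>m (2 ^ n)) = 1\<^sub>m (2^n)" by simp
  qed
  also have "\<dots> = 1\<^sub>m (2^n)" by (rule prodI_const_one)
  finally show ?thesis .
qed


lemma ms_mult_smult: assumes "dim_col A = dim_row B" shows "A * (k \<cdot>\<^sub>m B) = (k::complex) \<cdot>\<^sub>m (A * B)"
proof -
  have c: "A \<in> carrier_mat (dim_row A) (dim_col A)" "B \<in> carrier_mat (dim_col A) (dim_col B)"
    using assms unfolding carrier_mat_def by auto
  show ?thesis by (rule mult_smult_distrib[OF c])
qed

lemma ms_smult_mult: assumes "dim_col A = dim_row B" shows "(k \<cdot>\<^sub>m A) * B = (k::complex) \<cdot>\<^sub>m (A * B)"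
proof -
  have c: "A \<in> carrier_mat (dim_row A) (dim_col A)" "B \<in> carrier_mat (dim_col A) (dim_col B)"
    using assms unfolding carrier_mat_def by auto
  show ?thesis by (rule mult_smult_assoc_mat[OF c])
qed

lemma ms_mult_add: assumes "dim_col A = dim_row B" "dim_row B = dim_row C" "dim_col B = dim_col C"
  shows "A * (B + C) = A * B + A * (C :: complex mat)"
proof -
  have c: "A \<in> carrier_mat (dim_row A) (dim_col A)" "B \<in> carrier_mat (dim_col A) (dim_col B)" "C \<in> carrier_mat (dim_col A) (dim_col B)"
    using assms unfolding carrier_mat_def by auto
  show ?thesis by (rule mult_add_distrib_mat[OF c])
qed

lemma ms_add_mult: assumes "dim_row A = dim_row B" "dim_col A = dim_col B" "dim_col A = dim_row C"
  shows "(A + B) * C = A * C + B * (C :: complex mat)"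
proof -
  have c: "A \<in> carrier_mat (dim_row A) (dim_col A)" "B \<in> carrier_mat (dim_row A) (dim_col A)" "C \<in> carrier_mat (dim_col A) (dim_col C)"
    using assms unfolding carrier_mat_def by auto
  show ?thesis by (rule add_mult_distrib_mat[OF c])
qed

lemma ms_assoc: assumes "dim_col A = dim_row B" "dim_col B = dim_row C" shows "A * B * C = A * (B * (C :: complex mat))"
proof -
  have c: "A \<in> carrier_mat (dim_row A) (dim_col A)" "B \<in> carrier_mat (dim_col A) (dim_col B)" "C \<in> carrier_mat (dim_col B) (dim_col C)"
    using assms unfolding carrier_mat_def by auto
  show ?thesis by (rule assoc_mult_mat[OF c])
qed

lemma ms_smult_add: assumes "dim_row A = dim_row B" "dim_col A = dim_col B" shows "k \<cdot>\<^sub>m (A + B) = (k::complex) \<cdot>\<^sub>m A + k \<cdot>\<^sub>m B"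
proof -
  have c: "A \<in> carrier_mat (dim_row A) (dim_col A)" "B \<in> carrier_mat (dim_row A) (dim_col A)"
    using assms unfolding carrier_mat_def by auto
  show ?thesis by (rule add_smult_distrib_left_mat[OF c])
qed

lemmas msimps = ms_mult_smult ms_smult_mult ms_mult_add ms_add_mult ms_assoc ms_smult_add smult_smult

lemma four_pow: "(2::nat)^n * 2^n = 4^n"
  by (simp add: power_mult_distrib[symmetric])

definition LL :: "nat \<Rightarrow> nat \<Rightarrow> complex mat" where
  "LL n p = kron (majorana n p) (majorana n p)"

definition WW :: "nat \<Rightarrow> bool list \<Rightarrow> complex mat" where
  "WW n x = kron (cmon n x) (cmon n x)"

lemma LL_carrier[simp]: "LL n p \<in> carrier_mat (4^n) (4^n)"
  unfolding LL_def using kron_carrier[OF majorana_carrier majorana_carrier, of n p n p] four_pow[of n] by simp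

lemma WW_carrier[simp]: "WW n x \<in> carrier_mat (4^n) (4^n)"
  unfolding WW_def using kron_carrier[OF cmon_carrier cmon_carrier, of n x n x] four_pow[of n] by simp

lemma LL_dims[simp]: "dim_row (LL n p) = 4^n" "dim_col (LL n p) = 4^n"
  using LL_carrier[of n p] by (auto simp del: LL_carrier)

lemma WW_dims[simp]: "dim_row (WW n x) = 4^n" "dim_col (WW n x) = 4^n"
  using WW_carrier[of n x] by (auto simp del: WW_carrier)

lemma LL_herm: "p \<in> {1..2*n} \<Longrightarrow> dag (LL n p) = LL n p"
  unfolding LL_def dag_kron by (simp add: majorana_herm)

lemma LL_sq: "p \<in> {1..2*n} \<Longrightarrow> LL n p * LL n p = 1\<^sub>m (4^n)"
  unfolding LL_def by (simp add: kron_mult[OF majorana_carrier majorana_carrier majorana_carrier majorana_carrier]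
     majorana_sq kron_one four_pow)

lemma LL_comm: assumes "p \<in> {1..2*n}" "q \<in> {1..2*n}" shows "LL n p * LL n q = LL n q * LL n p"
proof (cases "p = q")
  case False
  have "LL n p * LL n q = kron (majorana n p * majorana n q) (majorana n p * majorana n q)"
    unfolding LL_def by (rule kron_mult) auto
  also have "\<dots> = kron ((-1) \<cdot>\<^sub>m (majorana n q * majorana n p)) ((-1) \<cdot>\<^sub>m (majorana n q * majorana n p))"
    using majorana_anti[OF assms False] by simp
  also have "\<dots> = kron (majorana n q * majorana n p) (majorana n q * majorana n p)"
    by (simp add: kron_smult_left kron_smult_right smult_smult)
  also have "\<dots> = LL n q * LL n p"
    unfolding LL_def by (rule kron_mult[symmetric]) auto
  finally show ?thesis .
qed simp

lemma WW_prodI: assumes "x \<in> bitstrings n"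
  shows "WW n x = prodI (4^n) (\<lambda>p. if x ! (p - 1) then LL n p else 1\<^sub>m (4^n)) [1..<2*n+1]"
proof -
  have "WW n x = prodI (2^n*2^n) (\<lambda>p. kron (if x ! (p - 1) then majorana n p else 1\<^sub>m (2^n)) (if x ! (p - 1) then majorana n p else 1\<^sub>m (2^n))) [1..<2*n+1]"
    unfolding WW_def cmon_prodI by (rule kron_prodI) auto
  also have "\<dots> = prodI (4^n) (\<lambda>p. if x ! (p - 1) then LL n p else 1\<^sub>m (4^n)) [1..<2*n+1]"
    unfolding four_pow by (rule prodI_cong) (auto simp: LL_def kron_one four_pow)
  finally show ?thesis .
qed

lemma WW_herm: assumes "x \<in> bitstrings n" shows "dag (WW n x) = WW n x"
  unfolding WW_prodI[OF assms]
  by (rule prodI_hermitian) (auto simp: LL_herm LL_comm)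

lemma mtrace_WW: assumes "x \<in> bitstrings n"
  shows "mtrace (WW n x) = (if True \<in> set x then 0 else of_nat (4^n))"
proof -
  have "mtrace (WW n x) = mtrace (cmon n x) * mtrace (cmon n x)"
    unfolding WW_def by (rule mtrace_kron[OF cmon_carrier cmon_carrier])
  moreover have "(of_nat (2^n) :: complex) * of_nat (2^n) = of_nat (4^n)"
    by (simp only: of_nat_mult[symmetric] four_pow)
  ultimately show ?thesis using mtrace_cmon[OF assms] cmon_zero[OF assms]
    by (auto simp: mtrace_one)
qed

section \<open>projectors\<close>

definition sg :: "bool \<Rightarrow> complex" where "sg b = (if b then 1 else -1)"

lemma sg_sq[simp]: "sg b * sg b = 1" unfolding sg_def by auto
lemma cnj_sg[simp]: "cnj (sg b) = sg b" unfolding sg_def by auto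

definition Qb :: "nat \<Rightarrow> bool \<Rightarrow> nat \<Rightarrow> complex mat" where
  "Qb n b p = (1/2) \<cdot>\<^sub>m (1\<^sub>m (4^n) + sg b \<cdot>\<^sub>m LL n p)"

definition PP :: "nat \<Rightarrow> bool list \<Rightarrow> complex mat" where
  "PP n A = prodI (4^n) (\<lambda>p. Qb n (A ! (p - 1)) p) [1..<2*n+1]"

definition chi :: "nat \<Rightarrow> bool list \<Rightarrow> bool list \<Rightarrow> complex" where
  "chi n A x = (\<Prod>p\<in>{1..2*n}. if x ! (p - 1) then sg (A ! (p - 1)) else 1)"

lemma Qb_carrier[simp]: "Qb n b p \<in> carrier_mat (4^n) (4^n)"
  unfolding Qb_def by auto

lemma Qb_dims[simp]: "dim_row (Qb n b p) = 4^n" "dim_col (Qb n b p) = 4^n"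
  using Qb_carrier[of n b p] by (auto simp del: Qb_carrier)

lemma PP_carrier[simp]: "PP n A \<in> carrier_mat (4^n) (4^n)"
  unfolding PP_def by (rule prodI_carrier) auto

lemma Qb_herm: "p \<in> {1..2*n} \<Longrightarrow> dag (Qb n b p) = Qb n b p"
  unfolding Qb_def by (simp add: dag_smult dag_add[of _ "4^n" "4^n"] LL_herm)

lemma LL_Qb_comm: assumes "p \<in> {1..2*n}" "q \<in> {1..2*n}"
  shows "LL n q * Qb n b p = Qb n b p * LL n q"
proof -
  have c: "LL n q \<in> carrier_mat (4^n) (4^n)" "LL n p \<in> carrier_mat (4^n) (4^n)" by auto
  have "LL n q * Qb n b p = (1/2) \<cdot>\<^sub>m (LL n q + sg b \<cdot>\<^sub>m (LL n q * LL n p))"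
    unfolding Qb_def using c
    by (simp add: msimps)
  also have "\<dots> = (1/2) \<cdot>\<^sub>m (LL n q + sg b \<cdot>\<^sub>m (LL n p * LL n q))" using LL_comm[OF assms] by simp
  also have "\<dots> = Qb n b p * LL n q"
    unfolding Qb_def using c
    by (simp add: msimps)
  finally show ?thesis .
qed

lemma LL_Qb_eigen: assumes "p \<in> {1..2*n}"
  shows "LL n p * Qb n b p = sg b \<cdot>\<^sub>m Qb n b p"
proof -
  have c: "LL n p \<in> carrier_mat (4^n) (4^n)" by auto
  have "LL n p * Qb n b p = (1/2) \<cdot>\<^sub>m (LL n p + sg b \<cdot>\<^sub>m (LL n p * LL n p))"
    unfolding Qb_def using c
    by (simp add: msimps)
  also have "\<dots> = (1/2) \<cdot>\<^sub>m (LL n p + sg b \<cdot>\<^sub>m 1\<^sub>m (4^n))" using LL_sq[OF assms] by simp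
  also have "\<dots> = sg b \<cdot>\<^sub>m Qb n b p"
    unfolding Qb_def using c
    by (rule_tac eq_matI) (auto simp: sg_def algebra_simps)
  finally show ?thesis .
qed

lemma Qb_comm: assumes "p \<in> {1..2*n}" "q \<in> {1..2*n}"
  shows "Qb n a p * Qb n b q = Qb n b q * Qb n a p"
proof -
  have c: "LL n q \<in> carrier_mat (4^n) (4^n)" "LL n p \<in> carrier_mat (4^n) (4^n)" by auto
  have "Qb n a p * Qb n b q = (1/2) \<cdot>\<^sub>m (Qb n a p + sg b \<cdot>\<^sub>m (Qb n a p * LL n q))"
    unfolding Qb_def[of n b q] using c
    by (simp add: msimps)
  also have "\<dots> = (1/2) \<cdot>\<^sub>m (Qb n a p + sg b \<cdot>\<^sub>m (LL n q * Qb n a p))" using LL_Qb_comm[OF assms] by simp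
  also have "\<dots> = Qb n b q * Qb n a p"
    unfolding Qb_def[of n b q] using c
    by (simp add: msimps)
  finally show ?thesis .
qed

lemma PP_dims[simp]: "dim_row (PP n A) = 4^n" "dim_col (PP n A) = 4^n"
  using PP_carrier[of n A] by (auto simp del: PP_carrier)

lemma PP_herm: "dag (PP n A) = PP n A"
  unfolding PP_def by (rule prodI_hermitian) (auto simp: Qb_herm Qb_comm)

lemma LL_PP: assumes "p \<in> {1..2*n}"
  shows "LL n p * PP n A = sg (A ! (p - 1)) \<cdot>\<^sub>m PP n A"
  unfolding PP_def
proof (rule prodI_eigen_one[where ?p0.0 = p])
  show "LL n p * Qb n (A ! (p - 1)) p = sg (A ! (p - 1)) \<cdot>\<^sub>m Qb n (A ! (p - 1)) p"
    by (rule LL_Qb_eigen[OF assms])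
  fix q assume "q \<in> set [1..<2*n+1]"
  then have "q \<in> {1..2*n}" by auto
  then show "LL n p * Qb n (A ! (q - 1)) q = Qb n (A ! (q - 1)) q * LL n p"
    by (rule LL_Qb_comm[OF _ assms])
qed (use assms in auto)


lemma pl_set: "prod_list (map f [1..<2*n+1]) = (\<Prod>p\<in>{1..2*n}. f p)"
proof -
  have eq: "set [1..<2*n+1] = {1..2*n}" by auto
  show ?thesis unfolding eq[symmetric] by (rule prod.distinct_set_conv_list[symmetric]) simp
qed

lemma cnj_chi[simp]: "cnj (chi n A x) = chi n A x"
  unfolding chi_def by (auto intro!: prod.cong)

lemma PP_LL: assumes "p \<in> {1..2*n}"
  shows "PP n A * LL n p = sg (A ! (p - 1)) \<cdot>\<^sub>m PP n A"
proof -
  have "PP n A * LL n p = dag (LL n p * PP n A)"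
    by (simp add: dag_mult[OF LL_carrier PP_carrier] PP_herm LL_herm[OF assms])
  also have "\<dots> = sg (A ! (p - 1)) \<cdot>\<^sub>m PP n A" unfolding LL_PP[OF assms] by (simp add: dag_smult PP_herm)
  finally show ?thesis .
qed

lemma WW_PP: assumes "x \<in> bitstrings n"
  shows "WW n x * PP n A = chi n A x \<cdot>\<^sub>m PP n A"
proof -
  have "WW n x * PP n A = prod_list (map (\<lambda>p. if x ! (p - 1) then sg (A ! (p - 1)) else 1) [1..<2*n+1]) \<cdot>\<^sub>m PP n A"
    unfolding WW_prodI[OF assms]
  proof (rule prodI_eigen)
    fix p assume "p \<in> set [1..<2*n+1]"
    then have p: "p \<in> {1..2*n}" by auto
    show "(if x ! (p - 1) then LL n p else 1\<^sub>m (4 ^ n)) * PP n A = (if x ! (p - 1) then sg (A ! (p - 1)) else 1) \<cdot>\<^sub>m PP n A"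
      using LL_PP[OF p] by auto
  qed auto
  then show ?thesis unfolding pl_set chi_def .
qed

lemma PP_WW: assumes "x \<in> bitstrings n"
  shows "PP n A * WW n x = chi n A x \<cdot>\<^sub>m PP n A"
proof -
  have "PP n A * WW n x = dag (WW n x * PP n A)"
    by (simp add: dag_mult[OF WW_carrier PP_carrier] PP_herm WW_herm[OF assms])
  also have "\<dots> = chi n A x \<cdot>\<^sub>m PP n A" unfolding WW_PP[OF assms] by (simp add: dag_smult PP_herm)
  finally show ?thesis .
qed

lemma Qb_PP: assumes "p \<in> {1..2*n}"
  shows "Qb n a p * PP n B = ((1 + sg a * sg (B ! (p - 1))) / 2) \<cdot>\<^sub>m PP n B"
proof -
  have "Qb n a p * PP n B = (1/2) \<cdot>\<^sub>m (PP n B + sg a \<cdot>\<^sub>m (LL n p * PP n B))"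
    unfolding Qb_def by (simp add: msimps)
  also have "\<dots> = ((1 + sg a * sg (B ! (p - 1))) / 2) \<cdot>\<^sub>m PP n B"
    unfolding LL_PP[OF assms] by (rule eq_matI) (auto simp: algebra_simps)
  finally show ?thesis .
qed

lemma PP_mult: assumes "A \<in> bitstrings n" "B \<in> bitstrings n"
  shows "PP n A * PP n B = (if A = B then PP n A else 0\<^sub>m (4^n) (4^n))"
proof -
  let ?c = "\<lambda>p. (1 + sg (A ! (p - 1)) * sg (B ! (p - 1))) / 2"
  have "PP n A * PP n B = prod_list (map ?c [1..<2*n+1]) \<cdot>\<^sub>m PP n B"
    unfolding PP_def[of n A]
  proof (rule prodI_eigen)
    fix p assume "p \<in> set [1..<2*n+1]"
    then have p: "p \<in> {1..2*n}" by auto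
    show "Qb n (A ! (p - 1)) p * PP n B = ?c p \<cdot>\<^sub>m PP n B" by (rule Qb_PP[OF p])
  qed auto
  also have "prod_list (map ?c [1..<2*n+1]) = (if A = B then 1 else 0)"
  proof (cases "A = B")
    case True
    then have "map ?c [1..<2*n+1] = map (\<lambda>p. 1) [1..<2*n+1]" by (auto simp: sg_def)
    moreover have "prod_list (map (\<lambda>p. 1::complex) xs) = 1" for xs :: "nat list" by (induction xs) auto
    ultimately show ?thesis using True by simp
  next
    case False
    have l: "length A = 2*n" "length B = 2*n" using assms unfolding bitstrings_def by auto
    have "\<exists>i<2*n. A ! i \<noteq> B ! i"
    proof (rule ccontr)
      assume "\<not> ?thesis"
      then have "A = B" using l by (intro nth_equalityI) auto
      then show False using False by simp
    qed
    then obtain i where i: "i < 2*n" "A ! i \<noteq> B ! i" by blast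
    have c0: "?c (Suc i) = 0" using i by (auto simp: sg_def)
    have mem: "Suc i \<in> set [1..<2*n+1]" using i by auto
    have m: "?c (Suc i) \<in> set (map ?c [1..<2*n+1])" unfolding set_map using mem by (rule imageI)
    have "0 \<in> set (map ?c [1..<2*n+1])" using m[unfolded c0] .
    then show ?thesis using False by (simp add: prod_list_zero_iff)
  qed
  finally show ?thesis by auto
qed

lemma Qb_sum: "Qb n False p + Qb n True p = 1\<^sub>m (4^n)"
  unfolding Qb_def by (rule eq_matI) (auto simp: sg_def field_simps)

lemma PP_sum: "msum (4^n) (bitstrings n) (PP n) = 1\<^sub>m (4^n)"
proof -
  have "prodI (4^n) (\<lambda>p. Qb n False p + Qb n True p) [1..<2*n+1] = msum (4^n) (bs (2*n)) (\<lambda>x. prodI (4^n) (\<lambda>p. if x ! (p - 1) then Qb n True p else Qb n False p) [1..<2*n+1])"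
    by (rule matrix_expand) auto
  also have "\<dots> = msum (4^n) (bitstrings n) (PP n)"
    unfolding bitstrings_bs[symmetric] PP_def by (rule msum_cong, rule prodI_cong) auto
  finally show ?thesis unfolding Qb_sum prodI_const_one by simp
qed

lemma Qb_split: "Qb n b p = (1/2) \<cdot>\<^sub>m 1\<^sub>m (4^n) + (sg b / 2) \<cdot>\<^sub>m LL n p"
  unfolding Qb_def by (rule eq_matI) auto

lemma PP_expand: assumes "A \<in> bitstrings n"
  shows "PP n A = msum (4^n) (bitstrings n) (\<lambda>x. (chi n A x / 2^(2*n)) \<cdot>\<^sub>m WW n x)"
proof -
  have "PP n A = prodI (4^n) (\<lambda>p. (1/2) \<cdot>\<^sub>m 1\<^sub>m (4^n) + (sg (A ! (p - 1)) / 2) \<cdot>\<^sub>m LL n p) [1..<2*n+1]"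
    unfolding PP_def Qb_split ..
  also have "\<dots> = msum (4^n) (bs (2*n)) (\<lambda>x. prodI (4^n) (\<lambda>p. if x ! (p - 1) then (sg (A ! (p - 1)) / 2) \<cdot>\<^sub>m LL n p else (1/2) \<cdot>\<^sub>m 1\<^sub>m (4^n)) [1..<2*n+1])"
    by (rule matrix_expand) auto
  also have "\<dots> = msum (4^n) (bitstrings n) (\<lambda>x. (chi n A x / 2^(2*n)) \<cdot>\<^sub>m WW n x)"
    unfolding bitstrings_bs[symmetric]
  proof (rule msum_cong)
    fix x assume x: "x \<in> bitstrings n"
    let ?c = "\<lambda>p. if x ! (p - 1) then sg (A ! (p - 1)) / 2 else 1/2"
    have "prodI (4^n) (\<lambda>p. if x ! (p - 1) then (sg (A ! (p - 1)) / 2) \<cdot>\<^sub>m LL n p else (1/2) \<cdot>\<^sub>m 1\<^sub>m (4^n)) [1..<2*n+1]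
       = prodI (4^n) (\<lambda>p. ?c p \<cdot>\<^sub>m (if x ! (p - 1) then LL n p else 1\<^sub>m (4^n))) [1..<2*n+1]"
      by (rule prodI_cong) auto
    also have "\<dots> = prod_list (map ?c [1..<2*n+1]) \<cdot>\<^sub>m WW n x"
      unfolding WW_prodI[OF x] by (rule prodI_smult) auto
    also have "prod_list (map ?c [1..<2*n+1]) = chi n A x / 2^(2*n)"
    proof -
      have "prod_list (map ?c [1..<2*n+1]) = (\<Prod>p\<in>{1..2*n}. (if x ! (p - 1) then sg (A ! (p - 1)) else 1) / 2)"
        unfolding pl_set by (rule prod.cong) auto
      also have "\<dots> = chi n A x / 2^(2*n)"
        unfolding chi_def prod_dividef by simp
      finally show ?thesis .
    qed
    finally show "prodI (4^n) (\<lambda>p. if x ! (p - 1) then (sg (A ! (p - 1)) / 2) \<cdot>\<^sub>m LL n p else (1/2) \<cdot>\<^sub>m 1\<^sub>m (4^n)) [1..<2*n+1]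
       = (chi n A x / 2^(2*n)) \<cdot>\<^sub>m WW n x" .
  qed
  finally show ?thesis .
qed

lemma mtrace_PP: assumes "A \<in> bitstrings n" shows "mtrace (PP n A) = 1"
proof -
  let ?z = "replicate (2*n) False"
  have z: "?z \<in> bitstrings n" unfolding bitstrings_def by simp
  have "mtrace (PP n A) = (\<Sum>x\<in>bitstrings n. mtrace ((chi n A x / 2^(2*n)) \<cdot>\<^sub>m WW n x))"
    unfolding PP_expand[OF assms] by (rule mtrace_msum) auto
  also have "\<dots> = (\<Sum>x\<in>bitstrings n. if x = ?z then chi n A x / 2^(2*n) * of_nat (4^n) else 0)"
  proof (rule sum.cong[OF refl])
    fix x assume x: "x \<in> bitstrings n"
    have "(True \<in> set x) = (x \<noteq> ?z)"
      using x unfolding bitstrings_def by (auto simp: replicate_length_same[symmetric] in_set_conv_nth)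
        (metis (full_types) in_set_conv_nth nth_equalityI length_replicate nth_replicate)
    then show "mtrace ((chi n A x / 2^(2*n)) \<cdot>\<^sub>m WW n x) = (if x = ?z then chi n A x / 2^(2*n) * of_nat (4^n) else 0)"
      using mtrace_WW[OF x] by (auto simp: mtrace_smult[OF WW_carrier])
  qed
  also have "\<dots> = chi n A ?z / 2^(2*n) * of_nat (4^n)"
    using z by (subst sum.delta) (auto simp: bitstrings_bs)
  also have "chi n A ?z = 1" unfolding chi_def by (auto intro!: prod.neutral)
  also have "(of_nat (4^n) :: complex) = 2^(2*n)" by (simp add: power_mult)
  finally show ?thesis by simp
qed

definition mu :: "nat \<Rightarrow> bool list \<Rightarrow> complex" where
  "mu n A = (\<Sum>p\<in>{1..2*n}. sg (A ! (p - 1)))"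

lemma Lambda_msum: "Lambda n = msum (4^n) {1..2*n} (LL n)"
  unfolding Lambda_def LL_def ..

lemma Lambda_carrier[simp]: "Lambda n \<in> carrier_mat (4^n) (4^n)"
  unfolding Lambda_msum by simp

lemma Lambda_dims[simp]: "dim_row (Lambda n) = 4^n" "dim_col (Lambda n) = 4^n"
  unfolding Lambda_msum by simp_all

lemma Lambda_herm: "dag (Lambda n) = Lambda n"
  unfolding Lambda_msum by (subst msum_dag) (auto intro!: msum_cong simp: LL_herm)

lemma Lambda_PP: "Lambda n * PP n A = mu n A \<cdot>\<^sub>m PP n A"
proof -
  have "Lambda n * PP n A = msum (4^n) {1..2*n} (\<lambda>p. LL n p * PP n A)"
    unfolding Lambda_msum by (rule msum_mult_right) auto
  also have "\<dots> = msum (4^n) {1..2*n} (\<lambda>p. sg (A ! (p - 1)) \<cdot>\<^sub>m PP n A)"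
    by (rule msum_cong) (simp add: LL_PP)
  also have "\<dots> = mu n A \<cdot>\<^sub>m PP n A" unfolding mu_def by (rule msum_smult_const) simp
  finally show ?thesis .
qed

lemma cnj_mu[simp]: "cnj (mu n A) = mu n A"
  unfolding mu_def by (auto intro!: sum.cong)

lemma PP_Lambda: "PP n A * Lambda n = mu n A \<cdot>\<^sub>m PP n A"
proof -
  have "PP n A * Lambda n = dag (Lambda n * PP n A)"
    by (simp add: dag_mult[OF Lambda_carrier PP_carrier] PP_herm Lambda_herm)
  also have "\<dots> = mu n A \<cdot>\<^sub>m PP n A" unfolding Lambda_PP by (simp add: dag_smult PP_herm)
  finally show ?thesis .
qed

lemma mu_zero_iff: assumes "A \<in> bitstrings n" shows "mu n A = 0 \<longleftrightarrow> hw A = n"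
proof -
  have l: "length A = 2*n" using assms unfolding bitstrings_def by auto
  let ?T = "{p\<in>{1..2*n}. A ! (p - 1)}"
  let ?F = "{p\<in>{1..2*n}. \<not> A ! (p - 1)}"
  have h: "hw A = card ?T" by (rule hw_card[OF l])
  have u: "?T \<union> ?F = {1..2*n}" by auto
  have "card ?T + card ?F = card (?T \<union> ?F)"
    by (rule card_Un_disjoint[symmetric]) auto
  then have s1: "card ?T + card ?F = card {1..2*n}" unfolding u .
  have c2: "card {1..2*n} = 2*n" by simp
  have s2: "card ?T + card ?F = 2*n" using s1[unfolded c2] .
  have cF: "card ?F = 2*n - hw A"
  proof -
    have "card ?F = (card ?T + card ?F) - card ?T" by (simp only: add_diff_cancel_left')
    also have "\<dots> = 2*n - card ?T" by (simp only: s2)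
    finally show ?thesis unfolding h .
  qed
  have "mu n A = (\<Sum>p\<in>{1..2*n} \<inter> {p. A ! (p - 1)}. 1) + (\<Sum>p\<in>{1..2*n} \<inter> - {p. A ! (p - 1)}. -1)"
    unfolding mu_def sg_def by (rule sum.If_cases) simp
  also have "{1..2*n} \<inter> {p. A ! (p - 1)} = ?T" by auto
  also have "{1..2*n} \<inter> - {p. A ! (p - 1)} = ?F" by auto
  finally have "mu n A = (\<Sum>p\<in>?T. 1) + (\<Sum>p\<in>?F. -1)" .
  also have "\<dots> = of_nat (card ?T) - of_nat (card ?F)" by simp
  also have "\<dots> = of_nat (hw A) - of_nat (2*n - hw A)" by (simp only: h[symmetric] cF[symmetric])
  finally have "mu n A = of_nat (hw A) - of_nat (2*n - hw A)" .
  moreover have "hw A \<le> 2*n" using s2 h by linarith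
  ultimately show ?thesis by (auto simp: of_nat_diff)
qed

lemma char_orth: assumes "A \<in> bitstrings n" "B \<in> bitstrings n"
  shows "(\<Sum>x\<in>bitstrings n. chi n A x * chi n B x) = (if A = B then 2^(2*n) else 0)"
proof -
  have "(\<Sum>x\<in>bitstrings n. chi n A x * chi n B x) =
     (\<Sum>x\<in>bs (2*n). \<Prod>p\<in>{1..2*n}. if x ! (p - 1) then sg (A ! (p - 1)) * sg (B ! (p - 1)) else 1)"
    unfolding bitstrings_bs
  proof (rule sum.cong[OF refl])
    fix x
    show "chi n A x * chi n B x = (\<Prod>p\<in>{1..2*n}. if x ! (p - 1) then sg (A ! (p - 1)) * sg (B ! (p - 1)) else 1)"
      unfolding chi_def prod.distrib[symmetric] by (rule prod.cong) auto
  qed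
  also have "\<dots> = (\<Prod>p\<in>{1..2*n}. 1 + sg (A ! (p - 1)) * sg (B ! (p - 1)))"
    by (rule scalar_expand)
  also have "\<dots> = (if A = B then 2^(2*n) else 0)"
  proof (cases "A = B")
    case True
    have "(\<Prod>p\<in>{1..2*n}. 1 + sg (A ! (p - 1)) * sg (B ! (p - 1))) = (\<Prod>p\<in>{1..2*n}. (2::complex))"
      using True by (intro prod.cong) (auto simp: sg_def)
    then show ?thesis using True by simp
  next
    case False
    have l: "length A = 2*n" "length B = 2*n" using assms unfolding bitstrings_def by auto
    have "\<exists>i<2*n. A ! i \<noteq> B ! i"
    proof (rule ccontr)
      assume "\<not> ?thesis"
      then have "A = B" using l by (intro nth_equalityI) auto
      then show False using False by simp
    qed
    then obtain i where i: "i < 2*n" "A ! i \<noteq> B ! i" by blast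
    have w: "Suc i \<in> {1..2*n}" using i by auto
    have z: "1 + sg (A ! (Suc i - 1)) * sg (B ! (Suc i - 1)) = 0"
      using i by (cases "A ! i") (auto simp: sg_def)
    have "\<exists>a\<in>{1..2*n}. 1 + sg (A ! (a - 1)) * sg (B ! (a - 1)) = 0" using z w by blast
    then have "(\<Prod>p\<in>{1..2*n}. 1 + sg (A ! (p - 1)) * sg (B ! (p - 1))) = 0"
      by (rule prod_zero[rotated]) simp
    then show ?thesis using False by simp
  qed
  finally show ?thesis .
qed


section \<open>rank one projectors\<close>

locale herm_proj =
  fixes N :: nat and P :: "complex mat"
  assumes carr: "P \<in> carrier_mat N N" and herm: "dag P = P" and idem: "P * P = P"
begin

lemma dims[simp]: "dim_row P = N" "dim_col P = N" using carr by auto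

lemma entry_herm: "r < N \<Longrightarrow> c < N \<Longrightarrow> P $$ (c,r) = cnj (P $$ (r,c))"
proof -
  assume rc: "r < N" "c < N"
  have "P $$ (c,r) = dag P $$ (c,r)" using herm by simp
  also have "\<dots> = cnj (P $$ (r,c))" using rc by simp
  finally show ?thesis .
qed

lemma entry_idem: "r < N \<Longrightarrow> c < N \<Longrightarrow> (\<Sum>k<N. P $$ (r,k) * P $$ (k,c)) = P $$ (r,c)"
proof -
  assume rc: "r < N" "c < N"
  have "(P * P) $$ (r,c) = (\<Sum>k<N. P $$ (r,k) * P $$ (k,c))"
    using rc by (auto simp: scalar_prod_def lessThan_atLeast0 intro!: sum.cong)
  then show ?thesis using idem by simp
qed

lemma H1: "c < N \<Longrightarrow> j < N \<Longrightarrow> (\<Sum>r<N. cnj (P $$ (r,c)) * P $$ (r,j)) = P $$ (c,j)"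
proof -
  assume cj: "c < N" "j < N"
  have "cnj (P $$ (r,c)) = P $$ (c,r)" if "r < N" for r
    using entry_herm[OF that cj(1)] by simp
  then have "(\<Sum>r<N. cnj (P $$ (r,c)) * P $$ (r,j)) = (\<Sum>r<N. P $$ (c,r) * P $$ (r,j))"
    by (intro sum.cong) auto
  also have "\<dots> = P $$ (c,j)" using cj by (rule entry_idem)
  finally show ?thesis .
qed

lemma diag_real: "j < N \<Longrightarrow> cnj (P $$ (j,j)) = P $$ (j,j)"
  using entry_herm[of j j] by simp

lemma diag_sum: "j < N \<Longrightarrow> P $$ (j,j) = of_real (\<Sum>r<N. (cmod (P $$ (r,j)))^2)"
proof -
  assume j: "j < N"
  have "P $$ (j,j) = (\<Sum>r<N. cnj (P $$ (r,j)) * P $$ (r,j))" using H1[OF j j] by simp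
  also have "\<dots> = (\<Sum>r<N. of_real ((cmod (P $$ (r,j)))^2))"
    by (intro sum.cong refl) (simp only: complex_norm_square mult.commute)
  finally show ?thesis by simp
qed

end

lemma sum_sq_zero: fixes f :: "nat \<Rightarrow> nat \<Rightarrow> complex"
  assumes "(\<Sum>r<N. \<Sum>c<N. f r c * cnj (f r c)) = 0" "r < N" "c < N"
  shows "f r c = 0"
proof -
  have e: "f r c * cnj (f r c) = of_real ((cmod (f r c))^2)" for r c
    by (rule complex_norm_square[symmetric])
  have "(\<Sum>r<N. \<Sum>c<N. f r c * cnj (f r c)) = of_real (\<Sum>r<N. \<Sum>c<N. (cmod (f r c))^2)"
    unfolding e by simp
  then have z: "(\<Sum>r<N. \<Sum>c<N. (cmod (f r c))^2) = 0" using assms(1) by (metis of_real_eq_0_iff)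
  have "(\<Sum>c<N. (cmod (f r c))^2) = 0"
    using z assms(2) by (subst (asm) sum_nonneg_eq_0_iff) (auto intro: sum_nonneg)
  then have "(cmod (f r c))^2 = 0"
    using assms(3) by (subst (asm) sum_nonneg_eq_0_iff) auto
  then show ?thesis by simp
qed

context herm_proj
begin

lemma rank_one_entries:
  assumes tr: "mtrace P = 1"
  obtains j where "j < N" "P $$ (j,j) \<noteq> 0"
    "\<And>r c. r < N \<Longrightarrow> c < N \<Longrightarrow> P $$ (r,c) = P $$ (r,j) * cnj (P $$ (c,j)) / P $$ (j,j)"
proof -
  have "\<exists>j<N. P $$ (j,j) \<noteq> 0"
  proof (rule ccontr)
    assume "\<not> ?thesis"
    then have "mtrace P = 0" unfolding mtrace_def by simp
    then show False using tr by simp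
  qed
  then obtain j where j: "j < N" "P $$ (j,j) \<noteq> 0" by blast
  define a where "a = P $$ (j,j)"
  have a0: "a \<noteq> 0" using j unfolding a_def by simp
  have ar: "cnj a = a" unfolding a_def using diag_real[OF j(1)] .
  define U where "U = (\<lambda>r c. P $$ (r,j) * cnj (P $$ (c,j)) / a)"
  define D where "D = (\<lambda>r c. P $$ (r,c) - U r c)"
  have T1: "(\<Sum>r<N. \<Sum>c<N. P $$ (r,c) * cnj (P $$ (r,c))) = 1"
  proof -
    have "(\<Sum>r<N. \<Sum>c<N. P $$ (r,c) * cnj (P $$ (r,c))) = (\<Sum>c<N. \<Sum>r<N. cnj (P $$ (r,c)) * P $$ (r,c))"
      by (subst sum.swap) (simp add: mult.commute)
    also have "\<dots> = (\<Sum>c<N. P $$ (c,c))" by (intro sum.cong) (auto simp: H1)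
    also have "\<dots> = 1" using tr unfolding mtrace_def by simp
    finally show ?thesis .
  qed
  have T2: "(\<Sum>r<N. \<Sum>c<N. P $$ (r,c) * cnj (U r c)) = 1"
  proof -
    have "(\<Sum>r<N. \<Sum>c<N. P $$ (r,c) * cnj (U r c)) = (\<Sum>r<N. \<Sum>c<N. cnj (P $$ (r,j)) * P $$ (r,c) * P $$ (c,j) / a)"
      unfolding U_def using ar by (intro sum.cong refl) (simp add: mult_ac)
    also have "\<dots> = (\<Sum>c<N. \<Sum>r<N. cnj (P $$ (r,j)) * P $$ (r,c) * P $$ (c,j) / a)"
      by (rule sum.swap)
    also have "\<dots> = (\<Sum>c<N. (\<Sum>r<N. cnj (P $$ (r,j)) * P $$ (r,c)) * P $$ (c,j) / a)"
      by (intro sum.cong refl) (simp add: sum_distrib_right sum_divide_distrib)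
    also have "\<dots> = (\<Sum>c<N. P $$ (j,c) * P $$ (c,j) / a)" using j by (intro sum.cong) (auto simp: H1)
    also have "\<dots> = (\<Sum>c<N. P $$ (j,c) * P $$ (c,j)) / a" by (simp add: sum_divide_distrib)
    also have "\<dots> = 1" using entry_idem[OF j(1) j(1)] a0 unfolding a_def by simp
    finally show ?thesis .
  qed
  have T3: "(\<Sum>r<N. \<Sum>c<N. U r c * cnj (P $$ (r,c))) = 1"
  proof -
    have "(\<Sum>r<N. \<Sum>c<N. U r c * cnj (P $$ (r,c))) = cnj (\<Sum>r<N. \<Sum>c<N. P $$ (r,c) * cnj (U r c))"
      by (simp add: mult.commute)
    then show ?thesis using T2 by simp
  qed
  have T4: "(\<Sum>r<N. \<Sum>c<N. U r c * cnj (U r c)) = 1"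
  proof -
    have aa: "a = (\<Sum>r<N. P $$ (r,j) * cnj (P $$ (r,j)))"
      unfolding a_def using H1[OF j(1) j(1)] by (simp add: mult.commute)
    have "(\<Sum>r<N. \<Sum>c<N. U r c * cnj (U r c)) = (\<Sum>r<N. P $$ (r,j) * cnj (P $$ (r,j))) * (\<Sum>c<N. P $$ (c,j) * cnj (P $$ (c,j))) / (a * a)"
      unfolding U_def using ar by (simp add: sum_product sum_divide_distrib mult_ac)
    also have "\<dots> = 1" using a0 unfolding aa[symmetric] by simp
    finally show ?thesis .
  qed
  have S: "(\<Sum>r<N. \<Sum>c<N. D r c * cnj (D r c)) = 0"
  proof -
    have "(\<Sum>r<N. \<Sum>c<N. D r c * cnj (D r c)) =
      (\<Sum>r<N. \<Sum>c<N. P $$ (r,c) * cnj (P $$ (r,c))) - (\<Sum>r<N. \<Sum>c<N. P $$ (r,c) * cnj (U r c))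
      - (\<Sum>r<N. \<Sum>c<N. U r c * cnj (P $$ (r,c))) + (\<Sum>r<N. \<Sum>c<N. U r c * cnj (U r c))"
      unfolding D_def by (simp add: algebra_simps sum.distrib sum_subtractf)
    then show ?thesis using T1 T2 T3 T4 by simp
  qed
  show ?thesis
  proof (rule that[OF j])
    fix r c assume rc: "r < N" "c < N"
    have "D r c = 0" by (rule sum_sq_zero[OF S rc])
    then show "P $$ (r,c) = P $$ (r,j) * cnj (P $$ (c,j)) / P $$ (j,j)"
      unfolding D_def U_def a_def by simp
  qed
qed

lemma sandwich:
  assumes tr: "mtrace P = 1" and X: "X \<in> carrier_mat N N"
  shows "P * X * P = mtrace (P * X) \<cdot>\<^sub>m P"
proof -
  obtain j where j: "j < N" "P $$ (j,j) \<noteq> 0"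
    and e: "\<And>r c. r < N \<Longrightarrow> c < N \<Longrightarrow> P $$ (r,c) = P $$ (r,j) * cnj (P $$ (c,j)) / P $$ (j,j)"
    using rank_one_entries[OF tr] by blast
  define a where "a = P $$ (j,j)"
  define s where "s = (\<Sum>k<N. \<Sum>l<N. cnj (P $$ (k,j)) * X $$ (k,l) * P $$ (l,j))"
  have tr2: "mtrace (P * X) = s / a"
  proof -
    have "mtrace (P * X) = (\<Sum>l<N. \<Sum>k<N. P $$ (l,k) * X $$ (k,l))"
      using X by (auto simp: mtrace_def scalar_prod_def lessThan_atLeast0 intro!: sum.cong)
    also have "\<dots> = (\<Sum>l<N. \<Sum>k<N. P $$ (l,j) * cnj (P $$ (k,j)) / a * X $$ (k,l))"
      unfolding a_def by (intro sum.cong refl) (simp add: e)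
    also have "\<dots> = s / a" unfolding s_def
      by (subst sum.swap) (simp add: sum_divide_distrib mult_ac)
    finally show ?thesis .
  qed
  show ?thesis
  proof (rule eq_matI)
    fix r c assume "r < dim_row (mtrace (P * X) \<cdot>\<^sub>m P)" "c < dim_col (mtrace (P * X) \<cdot>\<^sub>m P)"
    then have rc: "r < N" "c < N" by auto
    have "(P * X * P) $$ (r,c) = (\<Sum>l<N. (\<Sum>k<N. P $$ (r,k) * X $$ (k,l)) * P $$ (l,c))"
      using X rc by (auto simp: scalar_prod_def lessThan_atLeast0 intro!: sum.cong)
    also have "\<dots> = (\<Sum>l<N. (\<Sum>k<N. P $$ (r,j) * cnj (P $$ (k,j)) / a * X $$ (k,l)) * (P $$ (l,j) * cnj (P $$ (c,j)) / a))"
      unfolding a_def using rc by (intro sum.cong refl) (simp add: e)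
    also have "\<dots> = P $$ (r,j) * cnj (P $$ (c,j)) / a * (s / a)"
      unfolding s_def by (subst sum.swap) (simp add: sum_distrib_left sum_distrib_right sum_divide_distrib mult_ac)
    also have "\<dots> = (mtrace (P * X) \<cdot>\<^sub>m P) $$ (r,c)"
      using rc tr2 e[OF rc] unfolding a_def by simp
    finally show "(P * X * P) $$ (r,c) = (mtrace (P * X) \<cdot>\<^sub>m P) $$ (r,c)" .
  qed auto
qed

lemma vec_rank_one:
  assumes tr: "mtrace P = 1"
  obtains u where "u \<in> carrier_vec N" "u \<noteq> 0\<^sub>v N" "P *\<^sub>v u = u"
    "\<And>v. v \<in> carrier_vec N \<Longrightarrow> \<exists>c. P *\<^sub>v v = c \<cdot>\<^sub>v u"
proof -
  obtain j where j: "j < N" "P $$ (j,j) \<noteq> 0"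
    and e: "\<And>r c. r < N \<Longrightarrow> c < N \<Longrightarrow> P $$ (r,c) = P $$ (r,j) * cnj (P $$ (c,j)) / P $$ (j,j)"
    using rank_one_entries[OF tr] by blast
  define u where "u = col P j"
  have u: "u \<in> carrier_vec N" unfolding u_def carrier_vec_def by simp
  have u0: "u \<noteq> 0\<^sub>v N"
  proof
    assume "u = 0\<^sub>v N"
    then have "u $ j = 0" using j by simp
    then show False using j unfolding u_def by simp
  qed
  have Pu: "P *\<^sub>v u = u"
  proof -
    have "P *\<^sub>v u = col (P * P) j" unfolding u_def using col_mult2[OF carr carr j(1)] by simp
    then show ?thesis using idem unfolding u_def by simp
  qed
  show ?thesis
  proof (rule that[OF u u0 Pu])
    fix v :: "complex vec" assume v: "v \<in> carrier_vec N"
    define c where "c = (\<Sum>k<N. cnj (P $$ (k,j)) * v $ k) / P $$ (j,j)"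
    have "P *\<^sub>v v = c \<cdot>\<^sub>v u"
    proof (rule eq_vecI)
      fix r assume "r < dim_vec (c \<cdot>\<^sub>v u)"
      then have r: "r < N" using u by simp
      have "(P *\<^sub>v v) $ r = (\<Sum>k<N. P $$ (r,k) * v $ k)"
        using r v by (auto simp: scalar_prod_def lessThan_atLeast0 intro!: sum.cong)
      also have "\<dots> = (\<Sum>k<N. P $$ (r,j) * cnj (P $$ (k,j)) / P $$ (j,j) * v $ k)"
        using r by (intro sum.cong refl) (simp add: e)
      also have "\<dots> = (c \<cdot>\<^sub>v u) $ r"
        unfolding c_def u_def using r j by (simp add: sum_distrib_left sum_divide_distrib mult_ac)
      finally show "(P *\<^sub>v v) $ r = (c \<cdot>\<^sub>v u) $ r" .
    qed (use u v in auto)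
    then show "\<exists>c. P *\<^sub>v v = c \<cdot>\<^sub>v u" by blast
  qed
qed

end


definition Bal :: "nat \<Rightarrow> bool list set" where "Bal n = {A \<in> bitstrings n. hw A = n}"

definition PI :: "nat \<Rightarrow> complex mat" where "PI n = msum (4^n) (Bal n) (PP n)"

definition twirl :: "nat \<Rightarrow> complex mat \<Rightarrow> complex mat" where
  "twirl n X = (1 / 2 ^ (2 * n)) \<cdot>\<^sub>m msum (4^n) (bitstrings n) (\<lambda>x. WW n x * X * dag (WW n x))"

lemma zero_smult_mat[simp]: "(0::complex) \<cdot>\<^sub>m A = 0\<^sub>m (dim_row A) (dim_col A)"
  by (rule eq_matI) auto

lemma finite_bitstrings[simp]: "finite (bitstrings n)" unfolding bitstrings_bs by simp

lemma finite_Bal[simp]: "finite (Bal n)" unfolding Bal_def by simp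

lemma Bal_sub: "Bal n \<subseteq> bitstrings n" unfolding Bal_def by auto

lemma PI_carrier[simp]: "PI n \<in> carrier_mat (4^n) (4^n)" unfolding PI_def by simp

lemma PI_dims[simp]: "dim_row (PI n) = 4^n" "dim_col (PI n) = 4^n" unfolding PI_def by simp_all

lemma PP_proj: "A \<in> bitstrings n \<Longrightarrow> herm_proj (4^n) (PP n A)"
  by unfold_locales (auto simp: PP_herm PP_mult)

lemma mu_nonzero: "A \<in> bitstrings n \<Longrightarrow> A \<notin> Bal n \<Longrightarrow> mu n A \<noteq> 0"
  unfolding Bal_def using mu_zero_iff by auto

lemma mu_Bal: "A \<in> Bal n \<Longrightarrow> mu n A = 0"
  unfolding Bal_def using mu_zero_iff by auto

lemma PP_kill: assumes A: "A \<in> bitstrings n" "A \<notin> Bal n" and Y: "Y \<in> carrier_mat (4^n) (4^n)"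
  and LY: "Lambda n * Y = 0\<^sub>m (4^n) (4^n)"
  shows "PP n A * Y = 0\<^sub>m (4^n) (4^n)"
proof -
  have mu: "mu n A \<noteq> 0" by (rule mu_nonzero[OF A])
  have "mu n A \<cdot>\<^sub>m (PP n A * Y) = (PP n A * Lambda n) * Y"
    unfolding PP_Lambda using Y by (simp add: msimps)
  also have "\<dots> = PP n A * (Lambda n * Y)" using Y by (simp add: msimps)
  also have "\<dots> = 0\<^sub>m (4^n) (4^n)" unfolding LY using Y by simp
  finally have "mu n A \<cdot>\<^sub>m (PP n A * Y) = 0\<^sub>m (4^n) (4^n)" .
  then have "(1 / mu n A) \<cdot>\<^sub>m (mu n A \<cdot>\<^sub>m (PP n A * Y)) = 0\<^sub>m (4^n) (4^n)" by simp
  then show ?thesis using mu by (simp add: smult_smult)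
qed

lemma PI_fix: assumes Y: "Y \<in> carrier_mat (4^n) (4^n)" and LY: "Lambda n * Y = 0\<^sub>m (4^n) (4^n)"
  shows "PI n * Y = Y"
proof -
  have "Y = msum (4^n) (bitstrings n) (PP n) * Y" unfolding PP_sum using Y by simp
  also have "\<dots> = msum (4^n) (bitstrings n) (\<lambda>A. PP n A * Y)" by (rule msum_mult_right[OF Y]) simp
  also have "\<dots> = msum (4^n) (Bal n) (\<lambda>A. PP n A * Y)"
    by (rule msum_subset[OF Bal_sub]) (use PP_kill[OF _ _ Y LY] in auto)
  also have "\<dots> = PI n * Y" unfolding PI_def by (rule msum_mult_right[OF Y, symmetric]) simp
  finally show ?thesis by simp
qed

lemma Lambda_PI: "Lambda n * PI n = 0\<^sub>m (4^n) (4^n)"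
proof -
  have "Lambda n * PI n = msum (4^n) (Bal n) (\<lambda>A. Lambda n * PP n A)"
    unfolding PI_def by (rule msum_mult_left) auto
  also have "\<dots> = 0\<^sub>m (4^n) (4^n)"
    by (rule msum_zero) (simp add: Lambda_PP mu_Bal)
  finally show ?thesis .
qed

lemma PI_herm: "dag (PI n) = PI n"
  unfolding PI_def by (subst msum_dag) (auto simp: PP_herm)

lemma PI_idem: "PI n * PI n = PI n"
  by (rule PI_fix[OF PI_carrier Lambda_PI])

lemma mtrace_PI: "mtrace (PI n) = of_nat (card (Bal n))"
proof -
  have "mtrace (PI n) = (\<Sum>A\<in>Bal n. mtrace (PP n A))" unfolding PI_def by (rule mtrace_msum) auto
  also have "\<dots> = (\<Sum>A\<in>Bal n. 1)" by (rule sum.cong) (use Bal_sub mtrace_PP in auto)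
  finally show ?thesis by simp
qed

lemma WW_sandwich: assumes x: "x \<in> bitstrings n" and X: "X \<in> carrier_mat (4^n) (4^n)"
  shows "WW n x * (PP n A * X * PP n B) * dag (WW n x) = (chi n A x * chi n B x) \<cdot>\<^sub>m (PP n A * X * PP n B)"
proof -
  have d: "dim_row X = 4^n" "dim_col X = 4^n" using X by auto
  have "WW n x * (PP n A * X * PP n B) * dag (WW n x) = (WW n x * PP n A) * X * (PP n B * WW n x)"
    unfolding WW_herm[OF x] using d by (simp add: ms_assoc)
  also have "\<dots> = (chi n A x * chi n B x) \<cdot>\<^sub>m (PP n A * X * PP n B)"
    unfolding WW_PP[OF x] PP_WW[OF x] using d by (simp add: msimps mult.commute)
  finally show ?thesis .
qed

lemma twirl_formula: assumes X: "X \<in> carrier_mat (4^n) (4^n)"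
  shows "twirl n X = msum (4^n) (bitstrings n) (\<lambda>A. PP n A * X * PP n A)"
proof -
  let ?N = "4^n" and ?B = "bitstrings n"
  let ?M = "\<lambda>A B. PP n A * X * PP n B"
  have cM: "?M A B \<in> carrier_mat ?N ?N" for A B using X by auto
  have Xe: "X = msum ?N ?B (\<lambda>A. msum ?N ?B (\<lambda>B. ?M A B))"
  proof -
    have "X = msum ?N ?B (PP n) * X * msum ?N ?B (PP n)" unfolding PP_sum using X by simp
    also have "\<dots> = msum ?N ?B (\<lambda>A. PP n A * X) * msum ?N ?B (PP n)"
      by (subst msum_mult_right[OF X]) auto
    also have "\<dots> = msum ?N ?B (\<lambda>A. PP n A * X * msum ?N ?B (PP n))"
      by (rule msum_mult_right) (use X in auto)
    also have "\<dots> = msum ?N ?B (\<lambda>A. msum ?N ?B (\<lambda>B. ?M A B))"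
      by (rule msum_cong, rule msum_mult_left) (use X in auto)
    finally show ?thesis .
  qed
  have step: "WW n x * X * dag (WW n x) = msum ?N ?B (\<lambda>A. msum ?N ?B (\<lambda>B. (chi n A x * chi n B x) \<cdot>\<^sub>m ?M A B))"
    if x: "x \<in> ?B" for x
  proof -
    have "WW n x * X * dag (WW n x) = WW n x * msum ?N ?B (\<lambda>A. msum ?N ?B (\<lambda>B. ?M A B)) * dag (WW n x)"
      using Xe by simp
    also have "\<dots> = msum ?N ?B (\<lambda>A. WW n x * msum ?N ?B (\<lambda>B. ?M A B)) * dag (WW n x)"
      by (subst msum_mult_left) auto
    also have "\<dots> = msum ?N ?B (\<lambda>A. WW n x * msum ?N ?B (\<lambda>B. ?M A B) * dag (WW n x))"
      by (rule msum_mult_right) auto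
    also have "\<dots> = msum ?N ?B (\<lambda>A. msum ?N ?B (\<lambda>B. WW n x * ?M A B * dag (WW n x)))"
    proof (rule msum_cong)
      fix A
      have "WW n x * msum ?N ?B (\<lambda>B. ?M A B) * dag (WW n x) = msum ?N ?B (\<lambda>B. WW n x * ?M A B) * dag (WW n x)"
        by (subst msum_mult_left) (use cM in auto)
      also have "\<dots> = msum ?N ?B (\<lambda>B. WW n x * ?M A B * dag (WW n x))"
        by (rule msum_mult_right) (use cM in auto)
      finally show "WW n x * msum ?N ?B (\<lambda>B. ?M A B) * dag (WW n x) = msum ?N ?B (\<lambda>B. WW n x * ?M A B * dag (WW n x))" .
    qed
    also have "\<dots> = msum ?N ?B (\<lambda>A. msum ?N ?B (\<lambda>B. (chi n A x * chi n B x) \<cdot>\<^sub>m ?M A B))"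
      by (rule msum_cong, rule msum_cong, rule WW_sandwich[OF x X])
    finally show ?thesis .
  qed
  have "msum ?N ?B (\<lambda>x. WW n x * X * dag (WW n x)) = msum ?N ?B (\<lambda>x. msum ?N ?B (\<lambda>A. msum ?N ?B (\<lambda>B. (chi n A x * chi n B x) \<cdot>\<^sub>m ?M A B)))"
    by (rule msum_cong) (rule step)
  also have "\<dots> = msum ?N ?B (\<lambda>A. msum ?N ?B (\<lambda>x. msum ?N ?B (\<lambda>B. (chi n A x * chi n B x) \<cdot>\<^sub>m ?M A B)))"
    by (rule msum_swap)
  also have "\<dots> = msum ?N ?B (\<lambda>A. msum ?N ?B (\<lambda>B. msum ?N ?B (\<lambda>x. (chi n A x * chi n B x) \<cdot>\<^sub>m ?M A B)))"
    by (rule msum_cong, rule msum_swap)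
  also have "\<dots> = msum ?N ?B (\<lambda>A. msum ?N ?B (\<lambda>B. (\<Sum>x\<in>?B. chi n A x * chi n B x) \<cdot>\<^sub>m ?M A B))"
    by (rule msum_cong, rule msum_cong, rule msum_smult_const[OF cM])
  also have "\<dots> = msum ?N ?B (\<lambda>A. msum ?N ?B (\<lambda>B. (if A = B then 2^(2*n) else 0) \<cdot>\<^sub>m ?M A B))"
    by (rule msum_cong, rule msum_cong) (simp add: char_orth)
  also have "\<dots> = msum ?N ?B (\<lambda>A. 2^(2*n) \<cdot>\<^sub>m ?M A A)"
  proof (rule msum_cong)
    fix A assume A: "A \<in> ?B"
    have "msum ?N ?B (\<lambda>B. (if A = B then 2^(2*n) else 0) \<cdot>\<^sub>m ?M A B) = (if A = A then 2^(2*n) else 0) \<cdot>\<^sub>m ?M A A"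
      by (rule msum_delta) (use cM A in auto)
    then show "msum ?N ?B (\<lambda>B. (if A = B then 2^(2*n) else 0) \<cdot>\<^sub>m ?M A B) = 2^(2*n) \<cdot>\<^sub>m ?M A A" by simp
  qed
  finally have S: "msum ?N ?B (\<lambda>x. WW n x * X * dag (WW n x)) = msum ?N ?B (\<lambda>A. 2^(2*n) \<cdot>\<^sub>m ?M A A)" .
  show ?thesis unfolding twirl_def S
    by (subst msum_smult) (auto simp: smult_smult intro!: msum_cong)
qed


lemma twirl_K: assumes X: "X \<in> carrier_mat (4^n) (4^n)" and LX: "Lambda n * X = 0\<^sub>m (4^n) (4^n)"
  shows "twirl n X = msum (4^n) (Bal n) (\<lambda>A. mtrace (PP n A * X) \<cdot>\<^sub>m PP n A)"
proof -
  have "twirl n X = msum (4^n) (bitstrings n) (\<lambda>A. PP n A * X * PP n A)" by (rule twirl_formula[OF X])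
  also have "\<dots> = msum (4^n) (Bal n) (\<lambda>A. PP n A * X * PP n A)"
    by (rule msum_subset[OF Bal_sub]) (use PP_kill[OF _ _ X LX] in auto)
  also have "\<dots> = msum (4^n) (Bal n) (\<lambda>A. mtrace (PP n A * X) \<cdot>\<^sub>m PP n A)"
  proof (rule msum_cong)
    fix A assume "A \<in> Bal n"
    then have A: "A \<in> bitstrings n" using Bal_sub by auto
    interpret herm_proj "4^n" "PP n A" by (rule PP_proj[OF A])
    show "PP n A * X * PP n A = mtrace (PP n A * X) \<cdot>\<^sub>m PP n A"
      by (rule sandwich[OF mtrace_PP[OF A] X])
  qed
  finally show ?thesis .
qed

lemma trace_sum_Bal: assumes X: "X \<in> carrier_mat (4^n) (4^n)" and LX: "Lambda n * X = 0\<^sub>m (4^n) (4^n)"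
  shows "(\<Sum>A\<in>Bal n. mtrace (PP n A * X)) = mtrace X"
proof -
  have "(\<Sum>A\<in>Bal n. mtrace (PP n A * X)) = (\<Sum>A\<in>bitstrings n. mtrace (PP n A * X))"
    by (rule sum.mono_neutral_left) (use Bal_sub PP_kill[OF _ _ X LX] in \<open>auto simp: mtrace_zero\<close>)
  also have "\<dots> = mtrace (msum (4^n) (bitstrings n) (\<lambda>A. PP n A * X))"
    by (rule mtrace_msum[symmetric]) (use X in auto)
  also have "msum (4^n) (bitstrings n) (\<lambda>A. PP n A * X) = X"
    by (subst msum_mult_right[OF X, symmetric]) (use X in \<open>auto simp: PP_sum\<close>)
  finally show ?thesis .
qed

definition GG :: "nat \<Rightarrow> 'i set \<Rightarrow> ('i \<Rightarrow> real) \<Rightarrow> ('i \<Rightarrow> complex mat) \<Rightarrow> complex mat \<Rightarrow> complex mat" where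
  "GG n I pr U Y = msum (4^n) I (\<lambda>i. complex_of_real (pr i) \<cdot>\<^sub>m (kron (U i) (U i) * Y * dag (kron (U i) (U i))))"

lemma channel_GG: "channel n I pr U X = GG n I pr U (twirl n X)"
  unfolding channel_def GG_def twirl_def WW_def ..

lemma GG_lin: assumes V: "\<And>i. i \<in> I \<Longrightarrow> kron (U i) (U i) \<in> carrier_mat (4^n) (4^n)"
  and M: "\<And>k. k \<in> K \<Longrightarrow> M k \<in> carrier_mat (4^n) (4^n)"
  shows "GG n I pr U (msum (4^n) K (\<lambda>k. c k \<cdot>\<^sub>m M k)) = msum (4^n) K (\<lambda>k. c k \<cdot>\<^sub>m GG n I pr U (M k))"
proof -
  let ?N = "4^n"
  let ?V = "\<lambda>i. kron (U i) (U i)"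
  have inner: "?V i * msum ?N K (\<lambda>k. c k \<cdot>\<^sub>m M k) * dag (?V i) = msum ?N K (\<lambda>k. c k \<cdot>\<^sub>m (?V i * M k * dag (?V i)))"
    if i: "i \<in> I" for i
  proof -
    have "?V i * msum ?N K (\<lambda>k. c k \<cdot>\<^sub>m M k) * dag (?V i) = msum ?N K (\<lambda>k. ?V i * (c k \<cdot>\<^sub>m M k)) * dag (?V i)"
      by (subst msum_mult_left[OF V[OF i]]) (use M in auto)
    also have "\<dots> = msum ?N K (\<lambda>k. ?V i * (c k \<cdot>\<^sub>m M k) * dag (?V i))"
      by (rule msum_mult_right) (use V[OF i] M in auto)
    also have "\<dots> = msum ?N K (\<lambda>k. c k \<cdot>\<^sub>m (?V i * M k * dag (?V i)))"
    proof (rule msum_cong)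
      fix k assume k: "k \<in> K"
      have d: "dim_row (M k) = ?N" "dim_col (M k) = ?N" "dim_row (?V i) = ?N" "dim_col (?V i) = ?N"
        using M[OF k] V[OF i] by auto
      show "?V i * (c k \<cdot>\<^sub>m M k) * dag (?V i) = c k \<cdot>\<^sub>m (?V i * M k * dag (?V i))"
        using d by (simp add: msimps)
    qed
    finally show ?thesis .
  qed
  have cZ: "?V i * M k * dag (?V i) \<in> carrier_mat ?N ?N" if "i \<in> I" "k \<in> K" for i k
    using V[OF that(1)] M[OF that(2)] by (meson dag_carrier mult_carrier_mat)
  have "GG n I pr U (msum ?N K (\<lambda>k. c k \<cdot>\<^sub>m M k)) = msum ?N I (\<lambda>i. complex_of_real (pr i) \<cdot>\<^sub>m msum ?N K (\<lambda>k. c k \<cdot>\<^sub>m (?V i * M k * dag (?V i))))"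
    unfolding GG_def by (rule msum_cong) (simp add: inner)
  also have "\<dots> = msum ?N I (\<lambda>i. msum ?N K (\<lambda>k. c k \<cdot>\<^sub>m (complex_of_real (pr i) \<cdot>\<^sub>m (?V i * M k * dag (?V i)))))"
    by (rule msum_cong, subst msum_smult) (use cZ in \<open>auto simp: smult_smult mult.commute intro!: msum_cong\<close>)
  also have "\<dots> = msum ?N K (\<lambda>k. msum ?N I (\<lambda>i. c k \<cdot>\<^sub>m (complex_of_real (pr i) \<cdot>\<^sub>m (?V i * M k * dag (?V i)))))"
    by (rule msum_swap)
  also have "\<dots> = msum ?N K (\<lambda>k. c k \<cdot>\<^sub>m GG n I pr U (M k))"
    unfolding GG_def by (rule msum_cong, subst msum_smult) (use cZ in auto)
  finally show ?thesis .
qed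

lemma Tk_carrier[simp]: "Tk n k \<in> carrier_mat (4^n) (4^n)"
  unfolding Tk_def by simp

lemma GG_PP: assumes A: "A \<in> bitstrings n"
  and V: "\<And>i. i \<in> I \<Longrightarrow> kron (U i) (U i) \<in> carrier_mat (4^n) (4^n)"
  and mix: "majorana_mixing n I pr U"
  shows "GG n I pr U (PP n A) = msum (4^n) {0..2*n} (\<lambda>k. ((\<Sum>x\<in>{x\<in>bitstrings n. hw x = k}. chi n A x) / 2^(2*n)) \<cdot>\<^sub>m Tk n k)"
proof -
  have "GG n I pr U (PP n A) = msum (4^n) (bitstrings n) (\<lambda>x. (chi n A x / 2^(2*n)) \<cdot>\<^sub>m GG n I pr U (WW n x))"
    unfolding PP_expand[OF A] by (rule GG_lin[OF V]) auto
  also have "\<dots> = msum (4^n) (bitstrings n) (\<lambda>x. (chi n A x / 2^(2*n)) \<cdot>\<^sub>m Tk n (hw x))"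
    using mix unfolding majorana_mixing_def GG_def WW_def by (intro msum_cong) auto
  also have "\<dots> = msum (4^n) {0..2*n} (\<lambda>k. msum (4^n) {x\<in>bitstrings n. hw x = k} (\<lambda>x. (chi n A x / 2^(2*n)) \<cdot>\<^sub>m Tk n (hw x)))"
  proof (rule msum_partition)
    fix x assume "x \<in> bitstrings n"
    then have "hw x \<le> 2*n" unfolding bitstrings_def hw_def by (metis length_filter_le mem_Collect_eq)
    then show "hw x \<in> {0..2*n}" by simp
  qed auto
  also have "\<dots> = msum (4^n) {0..2*n} (\<lambda>k. ((\<Sum>x\<in>{x\<in>bitstrings n. hw x = k}. chi n A x) / 2^(2*n)) \<cdot>\<^sub>m Tk n k)"
  proof (rule msum_cong)
    fix k
    have "msum (4^n) {x\<in>bitstrings n. hw x = k} (\<lambda>x. (chi n A x / 2^(2*n)) \<cdot>\<^sub>m Tk n (hw x))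
      = msum (4^n) {x\<in>bitstrings n. hw x = k} (\<lambda>x. (chi n A x / 2^(2*n)) \<cdot>\<^sub>m Tk n k)"
      by (rule msum_cong) auto
    also have "\<dots> = (\<Sum>x\<in>{x\<in>bitstrings n. hw x = k}. chi n A x / 2^(2*n)) \<cdot>\<^sub>m Tk n k"
      by (rule msum_smult_const) simp
    finally show "msum (4^n) {x\<in>bitstrings n. hw x = k} (\<lambda>x. (chi n A x / 2^(2*n)) \<cdot>\<^sub>m Tk n (hw x))
      = ((\<Sum>x\<in>{x\<in>bitstrings n. hw x = k}. chi n A x) / 2^(2*n)) \<cdot>\<^sub>m Tk n k"
      by (simp add: sum_divide_distrib)
  qed
  finally show ?thesis .
qed


section \<open>polynomial independence\<close>

lemma prod_monom: "finite S \<Longrightarrow> (\<Prod>p\<in>S. monom (f p) (g p)) = monom (\<Prod>p\<in>S. f p) (\<Sum>p\<in>S. g p)"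
  by (induction rule: finite_induct) (auto simp: mult_monom)

lemma sum_if_card: "finite S \<Longrightarrow> (\<Sum>p\<in>S. if P p then 1 else 0) = card {p\<in>S. P p}"
  by (simp add: sum.inter_filter[symmetric])

lemma card_T: "A \<in> bitstrings n \<Longrightarrow> card {p\<in>{1..2*n}. A ! (p - 1)} = hw A"
  by (rule hw_card[symmetric]) (auto simp: bitstrings_def)

lemma card_F: assumes "A \<in> bitstrings n" shows "card {p\<in>{1..2*n}. \<not> A ! (p - 1)} = 2*n - hw A"
proof -
  let ?T = "{p\<in>{1..2*n}. A ! (p - 1)}"
  let ?F = "{p\<in>{1..2*n}. \<not> A ! (p - 1)}"
  have u: "?T \<union> ?F = {1..2*n}" by auto
  have "card ?T + card ?F = card (?T \<union> ?F)"
    by (rule card_Un_disjoint[symmetric]) auto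
  then have s1: "card ?T + card ?F = card {1..2*n}" unfolding u .
  have c2: "card {1..2*n} = 2*n" by simp
  have s2: "card ?T + card ?F = 2*n" using s1[unfolded c2] .
  have "card ?F = (card ?T + card ?F) - card ?T" by (simp only: add_diff_cancel_left')
  also have "\<dots> = 2*n - card ?T" by (simp only: s2)
  finally show ?thesis unfolding card_T[OF assms] .
qed

lemma chi_monom: assumes x: "x \<in> bitstrings n"
  shows "monom (chi n A x) (hw x) = (\<Prod>p\<in>{1..2*n}. if x ! (p - 1) then monom (sg (A ! (p - 1))) 1 else 1)"
proof -
  have "(\<Prod>p\<in>{1..2*n}. if x ! (p - 1) then monom (sg (A ! (p - 1))) 1 else 1) =
    (\<Prod>p\<in>{1..2*n}. monom (if x ! (p - 1) then sg (A ! (p - 1)) else 1) (if x ! (p - 1) then 1 else 0))"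
    by (rule prod.cong) (auto simp: monom_0 one_pCons)
  also have "\<dots> = monom (chi n A x) (\<Sum>p\<in>{1..2*n}. if x ! (p - 1) then 1 else 0)"
    unfolding chi_def by (rule prod_monom) simp
  also have "(\<Sum>p\<in>{1..2*n}. if x ! (p - 1) then 1 else 0) = hw x"
    by (subst sum_if_card) (use card_T[OF x] in auto)
  finally show ?thesis by simp
qed

lemma epoly: assumes A: "A \<in> bitstrings n"
  shows "(\<Sum>x\<in>bitstrings n. monom (chi n A x) (hw x)) = [:1,1:] ^ hw A * [:1,-1:] ^ (2*n - hw A)"
proof -
  have "(\<Sum>x\<in>bitstrings n. monom (chi n A x) (hw x)) =
     (\<Sum>x\<in>bs (2*n). \<Prod>p\<in>{1..2*n}. if x ! (p - 1) then monom (sg (A ! (p - 1))) 1 else 1)"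
    unfolding bitstrings_bs by (rule sum.cong) (auto simp: chi_monom bitstrings_bs)
  also have "\<dots> = (\<Prod>p\<in>{1..2*n}. 1 + monom (sg (A ! (p - 1))) 1)"
    by (rule scalar_expand)
  also have "\<dots> = (\<Prod>p\<in>{1..2*n}. if A ! (p - 1) then [:1,1:] else [:1,-1:])"
    by (rule prod.cong) (auto simp: sg_def monom_Suc monom_0 one_pCons)
  also have "\<dots> = (\<Prod>p\<in>{1..2*n} \<inter> {p. A ! (p - 1)}. [:1,1:]) * (\<Prod>p\<in>{1..2*n} \<inter> - {p. A ! (p - 1)}. [:1,-1:])"
    by (rule prod.If_cases) simp
  also have "{1..2*n} \<inter> {p. A ! (p - 1)} = {p\<in>{1..2*n}. A ! (p - 1)}" by auto
  also have "{1..2*n} \<inter> - {p. A ! (p - 1)} = {p\<in>{1..2*n}. \<not> A ! (p - 1)}" by auto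
  finally have eq: "(\<Sum>x\<in>bitstrings n. monom (chi n A x) (hw x)) =
    (\<Prod>p\<in>{p\<in>{1..2*n}. A ! (p - 1)}. [:1,1:]) * (\<Prod>p\<in>{p\<in>{1..2*n}. \<not> A ! (p - 1)}. [:1,-1:])" .
  show ?thesis unfolding eq prod_constant card_T[OF A] card_F[OF A] ..
qed

lemma e_indep: assumes A: "A \<in> bitstrings n" and B: "B \<in> bitstrings n" and h: "hw A = hw B"
  shows "(\<Sum>x\<in>{x\<in>bitstrings n. hw x = k}. chi n A x) = (\<Sum>x\<in>{x\<in>bitstrings n. hw x = k}. chi n B x)"
proof -
  have c: "coeff (\<Sum>x\<in>bitstrings n. monom (chi n C x) (hw x)) k = (\<Sum>x\<in>{x\<in>bitstrings n. hw x = k}. chi n C x)" for C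
    unfolding coeff_sum by (simp add: sum.inter_filter)
  show ?thesis using epoly[OF A] epoly[OF B] h c[of A] c[of B] by simp
qed

definition A0 :: "nat \<Rightarrow> bool list" where "A0 n = replicate n True @ replicate n False"

lemma A0_Bal: "A0 n \<in> Bal n"
  unfolding A0_def Bal_def bitstrings_def hw_def by simp

lemma Bal_bits: "A \<in> Bal n \<Longrightarrow> A \<in> bitstrings n" using Bal_sub by auto

lemma GG_PP_eq: assumes A: "A \<in> Bal n"
  and V: "\<And>i. i \<in> I \<Longrightarrow> kron (U i) (U i) \<in> carrier_mat (4^n) (4^n)"
  and mix: "majorana_mixing n I pr U"
  shows "GG n I pr U (PP n A) = GG n I pr U (PP n (A0 n))"
proof -
  have e1: "GG n I pr U (PP n A) = msum (4^n) {0..2*n} (\<lambda>k. ((\<Sum>x\<in>{x\<in>bitstrings n. hw x = k}. chi n A x) / 2^(2*n)) \<cdot>\<^sub>m Tk n k)"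
    by (rule GG_PP[OF Bal_bits[OF A] V mix])
  have e2: "GG n I pr U (PP n (A0 n)) = msum (4^n) {0..2*n} (\<lambda>k. ((\<Sum>x\<in>{x\<in>bitstrings n. hw x = k}. chi n (A0 n) x) / 2^(2*n)) \<cdot>\<^sub>m Tk n k)"
    by (rule GG_PP[OF Bal_bits[OF A0_Bal] V mix])
  show ?thesis unfolding e1 e2
  proof (rule msum_cong)
  fix k
  have "hw A = hw (A0 n)" using A A0_Bal[of n] unfolding Bal_def by simp
  then show "((\<Sum>x\<in>{x\<in>bitstrings n. hw x = k}. chi n A x) / 2^(2*n)) \<cdot>\<^sub>m Tk n k =
    ((\<Sum>x\<in>{x\<in>bitstrings n. hw x = k}. chi n (A0 n) x) / 2^(2*n)) \<cdot>\<^sub>m Tk n k"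
    using e_indep[OF Bal_bits[OF A] Bal_bits[OF A0_Bal]] by simp
  qed
qed

lemma channel_K: assumes X: "X \<in> carrier_mat (4^n) (4^n)" and LX: "Lambda n * X = 0\<^sub>m (4^n) (4^n)"
  and V: "\<And>i. i \<in> I \<Longrightarrow> kron (U i) (U i) \<in> carrier_mat (4^n) (4^n)"
  and mix: "majorana_mixing n I pr U"
  shows "channel n I pr U X = mtrace X \<cdot>\<^sub>m GG n I pr U (PP n (A0 n))"
proof -
  have "channel n I pr U X = GG n I pr U (msum (4^n) (Bal n) (\<lambda>A. mtrace (PP n A * X) \<cdot>\<^sub>m PP n A))"
    unfolding channel_GG twirl_K[OF X LX] ..
  also have "\<dots> = msum (4^n) (Bal n) (\<lambda>A. mtrace (PP n A * X) \<cdot>\<^sub>m GG n I pr U (PP n A))"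
    by (rule GG_lin[OF V]) auto
  also have "\<dots> = msum (4^n) (Bal n) (\<lambda>A. mtrace (PP n A * X) \<cdot>\<^sub>m GG n I pr U (PP n (A0 n)))"
    by (rule msum_cong) (simp add: GG_PP_eq[OF _ V mix])
  also have "\<dots> = (\<Sum>A\<in>Bal n. mtrace (PP n A * X)) \<cdot>\<^sub>m GG n I pr U (PP n (A0 n))"
    by (rule msum_smult_const) (simp add: GG_def)
  finally show ?thesis unfolding trace_sum_Bal[OF X LX] .
qed


section \<open>Gaussian unitaries preserve Lambda\<close>

lemma sum_shift1: "(\<Sum>q\<in>{1..m}. f q) = (\<Sum>k<m. f (Suc k))"
proof -
  have "{1..m} = Suc ` {..<m}" by (auto simp: image_iff) (metis Suc_pred' lessThan_iff less_Suc_eq_le not_gr0 not_less_eq_eq)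
  then show ?thesis by (simp add: sum.reindex)
qed

lemma col_orth:
  fixes R :: "nat \<Rightarrow> nat \<Rightarrow> real"
  assumes rows: "\<forall>p\<in>{1..m}. \<forall>p'\<in>{1..m}. (\<Sum>q\<in>{1..m}. R p q * R p' q) = (if p = p' then 1 else 0)"
  and q: "q \<in> {1..m}" and q': "q' \<in> {1..m}"
  shows "(\<Sum>p\<in>{1..m}. R p q * R p q') = (if q = q' then 1 else 0)"
proof -
  define Rm where "Rm = mat m m (\<lambda>(i,j). R (Suc i) (Suc j))"
  have Rc: "Rm \<in> carrier_mat m m" "transpose_mat Rm \<in> carrier_mat m m" unfolding Rm_def by auto
  have "Rm * transpose_mat Rm = 1\<^sub>m m"
  proof (rule eq_matI)
    fix i i' assume "i < dim_row (1\<^sub>m m)" "i' < dim_col (1\<^sub>m m)"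
    then have ii: "i < m" "i' < m" by auto
    have "(Rm * transpose_mat Rm) $$ (i,i') = (\<Sum>k<m. R (Suc i) (Suc k) * R (Suc i') (Suc k))"
      unfolding Rm_def using ii by (auto simp: scalar_prod_def lessThan_atLeast0 intro!: sum.cong)
    also have "\<dots> = (\<Sum>q\<in>{1..m}. R (Suc i) q * R (Suc i') q)" by (rule sum_shift1[symmetric])
    also have "\<dots> = (if i = i' then 1 else 0)" using rows ii by auto
    finally show "(Rm * transpose_mat Rm) $$ (i,i') = 1\<^sub>m m $$ (i,i')" using ii by simp
  qed (auto simp: Rm_def)
  then have TR: "transpose_mat Rm * Rm = 1\<^sub>m m" by (rule mat_mult_left_right_inverse[OF Rc])
  obtain j j' where j: "q = Suc j" "q' = Suc j'" "j < m" "j' < m" using q q'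
    by (metis Suc_le_eq Suc_pred' atLeastAtMost_iff not_gr0 not_less_eq_eq One_nat_def)
  have "(transpose_mat Rm * Rm) $$ (j,j') = (\<Sum>k<m. R (Suc k) (Suc j) * R (Suc k) (Suc j'))"
    unfolding Rm_def using j by (auto simp: scalar_prod_def lessThan_atLeast0 intro!: sum.cong)
  also have "\<dots> = (\<Sum>p\<in>{1..m}. R p q * R p q')" unfolding j by (rule sum_shift1[symmetric])
  finally show ?thesis using TR j by auto
qed

lemma kron_conj: assumes U: "U \<in> carrier_mat (2^n) (2^n)" and C: "C \<in> carrier_mat (2^n) (2^n)"
  shows "kron U U * kron C C * dag (kron U U) = kron (U * C * dag U) (U * C * dag U)"
proof -
  have "kron U U * kron C C = kron (U * C) (U * C)" by (rule kron_mult[OF U C U C])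
  then have "kron U U * kron C C * dag (kron U U) = kron (U * C) (U * C) * kron (dag U) (dag U)"
    by (simp add: dag_kron)
  also have "\<dots> = kron (U * C * dag U) (U * C * dag U)"
    by (rule kron_mult) (use U C in auto)
  finally show ?thesis .
qed

lemma gauss_V_carrier: "unitary_mat (2^n) U \<Longrightarrow> kron U U \<in> carrier_mat (4^n) (4^n)"
  unfolding unitary_mat_def using kron_carrier[of U "2^n" "2^n" U "2^n" "2^n"] four_pow[of n] by simp

lemma gauss_V_unitary: assumes "unitary_mat (2^n) U"
  shows "kron U U * dag (kron U U) = 1\<^sub>m (4^n)" "dag (kron U U) * kron U U = 1\<^sub>m (4^n)"
proof -
  have U: "U \<in> carrier_mat (2^n) (2^n)" "U * dag U = 1\<^sub>m (2^n)" "dag U * U = 1\<^sub>m (2^n)"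
    using assms unfolding unitary_mat_def by auto
  show "kron U U * dag (kron U U) = 1\<^sub>m (4^n)"
    unfolding dag_kron by (subst kron_mult) (use U in \<open>auto simp: kron_one four_pow\<close>)
  show "dag (kron U U) * kron U U = 1\<^sub>m (4^n)"
    unfolding dag_kron by (subst kron_mult) (use U in \<open>auto simp: kron_one four_pow\<close>)
qed

lemma gauss_Lambda: assumes g: "gaussian_unitary n U"
  shows "kron U U * Lambda n * dag (kron U U) = Lambda n"
proof -
  let ?N = "4^n" and ?V = "kron U U" and ?m = "2*n"
  have uni: "unitary_mat (2^n) U" using g unfolding gaussian_unitary_def by auto
  then have U: "U \<in> carrier_mat (2^n) (2^n)" unfolding unitary_mat_def by auto
  have V: "?V \<in> carrier_mat ?N ?N" by (rule gauss_V_carrier[OF uni])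
  obtain R :: "nat \<Rightarrow> nat \<Rightarrow> real" where
    rows: "\<forall>p\<in>{1..?m}. \<forall>p'\<in>{1..?m}. (\<Sum>q\<in>{1..?m}. R p q * R p' q) = (if p = p' then 1 else 0)"
    and tr: "\<forall>p\<in>{1..?m}. U * majorana n p * dag U = msum (2^n) {1..?m} (\<lambda>q. complex_of_real (R p q) \<cdot>\<^sub>m majorana n q)"
    using g unfolding gaussian_unitary_def by blast
  let ?K = "\<lambda>q q'. kron (majorana n q) (majorana n q')"
  have cK: "?K q q' \<in> carrier_mat ?N ?N" for q q'
    using kron_carrier[OF majorana_carrier majorana_carrier, of n q n q'] four_pow[of n] by simp
  have one: "?V * LL n p * dag ?V = msum ?N {1..?m} (\<lambda>q. msum ?N {1..?m} (\<lambda>q'. complex_of_real (R p q * R p q') \<cdot>\<^sub>m ?K q q'))"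
    if p: "p \<in> {1..?m}" for p
  proof -
    let ?C = "msum (2^n) {1..?m} (\<lambda>q. complex_of_real (R p q) \<cdot>\<^sub>m majorana n q)"
    have "?V * LL n p * dag ?V = kron ?C ?C"
      unfolding LL_def kron_conj[OF U majorana_carrier] using tr p by simp
    also have "\<dots> = msum (2^n * 2^n) {1..?m} (\<lambda>q. kron (complex_of_real (R p q) \<cdot>\<^sub>m majorana n q) ?C)"
      by (rule kron_msum_left) auto
    also have "\<dots> = msum ?N {1..?m} (\<lambda>q. msum ?N {1..?m} (\<lambda>q'. complex_of_real (R p q * R p q') \<cdot>\<^sub>m ?K q q'))"
      unfolding four_pow
    proof (rule msum_cong)
      fix q
      have "kron (complex_of_real (R p q) \<cdot>\<^sub>m majorana n q) ?C = complex_of_real (R p q) \<cdot>\<^sub>m kron (majorana n q) ?C"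
        by (rule kron_smult_left)
      also have "kron (majorana n q) ?C = msum (2^n * 2^n) {1..?m} (\<lambda>q'. kron (majorana n q) (complex_of_real (R p q') \<cdot>\<^sub>m majorana n q'))"
        by (rule kron_msum_right) auto
      also have "\<dots> = msum ?N {1..?m} (\<lambda>q'. complex_of_real (R p q') \<cdot>\<^sub>m ?K q q')"
        unfolding four_pow by (rule msum_cong) (rule kron_smult_right)
      also have "complex_of_real (R p q) \<cdot>\<^sub>m msum ?N {1..?m} (\<lambda>q'. complex_of_real (R p q') \<cdot>\<^sub>m ?K q q')
        = msum ?N {1..?m} (\<lambda>q'. complex_of_real (R p q * R p q') \<cdot>\<^sub>m ?K q q')"
        by (subst msum_smult) (use cK in \<open>auto simp: smult_smult intro!: msum_cong\<close>)
      finally show "kron (complex_of_real (R p q) \<cdot>\<^sub>m majorana n q) ?C = msum ?N {1..?m} (\<lambda>q'. complex_of_real (R p q * R p q') \<cdot>\<^sub>m ?K q q')" .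
    qed
    finally show ?thesis .
  qed
  have "?V * Lambda n * dag ?V = msum ?N {1..?m} (\<lambda>p. ?V * LL n p) * dag ?V"
    unfolding Lambda_msum by (subst msum_mult_left[OF V]) auto
  also have "\<dots> = msum ?N {1..?m} (\<lambda>p. ?V * LL n p * dag ?V)"
    by (rule msum_mult_right) (use V in auto)
  also have "\<dots> = msum ?N {1..?m} (\<lambda>p. msum ?N {1..?m} (\<lambda>q. msum ?N {1..?m} (\<lambda>q'. complex_of_real (R p q * R p q') \<cdot>\<^sub>m ?K q q')))"
    by (rule msum_cong) (rule one)
  also have "\<dots> = msum ?N {1..?m} (\<lambda>q. msum ?N {1..?m} (\<lambda>p. msum ?N {1..?m} (\<lambda>q'. complex_of_real (R p q * R p q') \<cdot>\<^sub>m ?K q q')))"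
    by (rule msum_swap)
  also have "\<dots> = msum ?N {1..?m} (\<lambda>q. msum ?N {1..?m} (\<lambda>q'. msum ?N {1..?m} (\<lambda>p. complex_of_real (R p q * R p q') \<cdot>\<^sub>m ?K q q')))"
    by (rule msum_cong, rule msum_swap)
  also have "\<dots> = msum ?N {1..?m} (\<lambda>q. msum ?N {1..?m} (\<lambda>q'. (\<Sum>p\<in>{1..?m}. complex_of_real (R p q * R p q')) \<cdot>\<^sub>m ?K q q'))"
    by (rule msum_cong, rule msum_cong, rule msum_smult_const[OF cK])
  also have "\<dots> = msum ?N {1..?m} (\<lambda>q. msum ?N {1..?m} (\<lambda>q'. (if q = q' then 1 else 0) \<cdot>\<^sub>m ?K q q'))"
  proof (rule msum_cong, rule msum_cong)
    fix q q' assume q: "q \<in> {1..?m}" and q': "q' \<in> {1..?m}"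
    have "(\<Sum>p\<in>{1..?m}. complex_of_real (R p q * R p q')) = complex_of_real (\<Sum>p\<in>{1..?m}. R p q * R p q')" by simp
    also have "\<dots> = (if q = q' then 1 else 0)" using col_orth[OF rows q q'] by simp
    finally show "(\<Sum>p\<in>{1..?m}. complex_of_real (R p q * R p q')) \<cdot>\<^sub>m ?K q q' = (if q = q' then 1 else 0) \<cdot>\<^sub>m ?K q q'" by simp
  qed
  also have "\<dots> = msum ?N {1..?m} (\<lambda>q. ?K q q)"
  proof (rule msum_cong)
    fix q assume q: "q \<in> {1..?m}"
    have "msum ?N {1..?m} (\<lambda>q'. (if q = q' then 1 else 0) \<cdot>\<^sub>m ?K q q') = (if q = q then 1 else 0) \<cdot>\<^sub>m ?K q q"
      by (rule msum_delta) (use q cK in \<open>auto simp: four_pow\<close>)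
    then show "msum ?N {1..?m} (\<lambda>q'. (if q = q' then 1 else 0) \<cdot>\<^sub>m ?K q q') = ?K q q" by simp
  qed
  also have "\<dots> = Lambda n" unfolding Lambda_def ..
  finally show ?thesis .
qed


lemma V_commute_PI: assumes g: "gaussian_unitary n U"
  shows "kron U U * PI n = PI n * kron U U"
proof -
  let ?N = "4^n" and ?V = "kron U U"
  have uni: "unitary_mat (2^n) U" using g unfolding gaussian_unitary_def by auto
  have V: "?V \<in> carrier_mat ?N ?N" by (rule gauss_V_carrier[OF uni])
  have dV: "dim_row ?V = ?N" "dim_col ?V = ?N" using V by auto
  note VU = gauss_V_unitary[OF uni]
  have conj: "?V * Lambda n * dag ?V = Lambda n" by (rule gauss_Lambda[OF g])
  have c1: "?V * Lambda n = Lambda n * ?V"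
  proof -
    have "?V * Lambda n = ?V * Lambda n * (dag ?V * ?V)" unfolding VU(2) using dV by simp
    also have "\<dots> = (?V * Lambda n * dag ?V) * ?V" using dV by (simp add: ms_assoc)
    finally show ?thesis unfolding conj .
  qed
  have c2: "dag ?V * Lambda n = Lambda n * dag ?V"
  proof -
    have "dag ?V * Lambda n = dag ?V * (?V * Lambda n * dag ?V)" unfolding conj ..
    also have "\<dots> = (dag ?V * ?V) * Lambda n * dag ?V" using dV by (simp add: ms_assoc)
    also have "\<dots> = Lambda n * dag ?V" unfolding VU(2) using dV by simp
    finally show ?thesis .
  qed
  have f1: "PI n * (?V * PI n) = ?V * PI n"
  proof (rule PI_fix)
    show "?V * PI n \<in> carrier_mat ?N ?N" using V by simp
    have "Lambda n * (?V * PI n) = ?V * (Lambda n * PI n)"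
      using dV by (simp add: ms_assoc[symmetric] c1)
    then show "Lambda n * (?V * PI n) = 0\<^sub>m ?N ?N" unfolding Lambda_PI using right_mult_zero_mat[OF V] by simp
  qed
  have f2: "PI n * (dag ?V * PI n) = dag ?V * PI n"
  proof (rule PI_fix)
    show "dag ?V * PI n \<in> carrier_mat ?N ?N" using mult_carrier_mat[OF dag_carrier[OF V] PI_carrier] .
    have "Lambda n * (dag ?V * PI n) = dag ?V * (Lambda n * PI n)"
      using dV by (simp add: ms_assoc[symmetric] c2)
    then show "Lambda n * (dag ?V * PI n) = 0\<^sub>m ?N ?N" unfolding Lambda_PI using right_mult_zero_mat[OF dag_carrier[OF V]] by simp
  qed
  have d1: "dag (dag ?V * PI n) = PI n * ?V"
    using dag_mult[OF dag_carrier[OF V] PI_carrier] PI_herm by simp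
  have "dag (PI n * (dag ?V * PI n)) = dag (dag ?V * PI n) * dag (PI n)"
    by (rule dag_mult[OF PI_carrier mult_carrier_mat[OF dag_carrier[OF V] PI_carrier]])
  then have "dag (PI n * (dag ?V * PI n)) = PI n * ?V * PI n" unfolding d1 PI_herm .
  moreover note d1
  ultimately have "PI n * ?V * PI n = PI n * ?V" using f2 by simp
  then show ?thesis using f1 dV by (simp add: ms_assoc)
qed

lemma GG_PI: assumes ens: "gaussian_ensemble n I pr U"
  shows "GG n I pr U (PI n) = PI n"
proof -
  have fin: "finite I" and s1: "(\<Sum>i\<in>I. pr i) = 1" and g: "\<And>i. i \<in> I \<Longrightarrow> gaussian_unitary n (U i)"
    using ens unfolding gaussian_ensemble_def by auto
  have "GG n I pr U (PI n) = msum (4^n) I (\<lambda>i. complex_of_real (pr i) \<cdot>\<^sub>m PI n)"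
    unfolding GG_def
  proof (rule msum_cong)
    fix i assume i: "i \<in> I"
    have uni: "unitary_mat (2^n) (U i)" using g[OF i] unfolding gaussian_unitary_def by auto
    have dV: "dim_row (kron (U i) (U i)) = 4^n" "dim_col (kron (U i) (U i)) = 4^n"
      using gauss_V_carrier[OF uni] by auto
    have "kron (U i) (U i) * PI n * dag (kron (U i) (U i)) = PI n * (kron (U i) (U i) * dag (kron (U i) (U i)))"
      unfolding V_commute_PI[OF g[OF i]] using dV by (simp add: ms_assoc)
    also have "\<dots> = PI n" unfolding gauss_V_unitary(1)[OF uni] by simp
    finally show "complex_of_real (pr i) \<cdot>\<^sub>m (kron (U i) (U i) * PI n * dag (kron (U i) (U i))) = complex_of_real (pr i) \<cdot>\<^sub>m PI n"
      by simp
  qed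
  also have "\<dots> = (\<Sum>i\<in>I. complex_of_real (pr i)) \<cdot>\<^sub>m PI n" by (rule msum_smult_const) simp
  also have "(\<Sum>i\<in>I. complex_of_real (pr i)) = 1" using s1 by (metis of_real_1 of_real_sum)
  finally show ?thesis by simp
qed

lemma PP_PI: assumes A: "A \<in> Bal n" shows "PP n A * PI n = PP n A"
proof -
  have "PP n A * PI n = msum (4^n) (Bal n) (\<lambda>B. PP n A * PP n B)"
    unfolding PI_def by (rule msum_mult_left) auto
  also have "\<dots> = PP n A * PP n A"
    by (rule msum_delta) (use A Bal_bits in \<open>auto simp: PP_mult\<close>)
  also have "\<dots> = PP n A" using A Bal_bits by (auto simp: PP_mult)
  finally show ?thesis .
qed

lemma twirl_PI: "twirl n (PI n) = PI n"
proof -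
  have "twirl n (PI n) = msum (4^n) (Bal n) (\<lambda>A. mtrace (PP n A * PI n) \<cdot>\<^sub>m PP n A)"
    by (rule twirl_K[OF PI_carrier Lambda_PI])
  also have "\<dots> = msum (4^n) (Bal n) (PP n)"
  proof (rule msum_cong)
    fix A assume A: "A \<in> Bal n"
    show "mtrace (PP n A * PI n) \<cdot>\<^sub>m PP n A = PP n A"
      unfolding PP_PI[OF A] mtrace_PP[OF Bal_bits[OF A]] by simp
  qed
  finally show ?thesis unfolding PI_def .
qed

lemma V_carriers: "gaussian_ensemble n I pr U \<Longrightarrow> i \<in> I \<Longrightarrow> kron (U i) (U i) \<in> carrier_mat (4^n) (4^n)"
  unfolding gaussian_ensemble_def gaussian_unitary_def by (auto intro: gauss_V_carrier)

lemma PI_eq_M0: assumes ens: "gaussian_ensemble n I pr U" and mix: "majorana_mixing n I pr U"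
  shows "PI n = of_nat (card (Bal n)) \<cdot>\<^sub>m GG n I pr U (PP n (A0 n))"
proof -
  have "PI n = channel n I pr U (PI n)" unfolding channel_GG twirl_PI GG_PI[OF ens] ..
  also have "\<dots> = mtrace (PI n) \<cdot>\<^sub>m GG n I pr U (PP n (A0 n))"
    by (rule channel_K[OF PI_carrier Lambda_PI V_carriers[OF ens] mix])
  finally show ?thesis unfolding mtrace_PI .
qed


lemma mult_unit_vec: fixes A :: "complex mat" assumes "A \<in> carrier_mat N N" "j < N"
  shows "A *\<^sub>v unit_vec N j = col A j"
proof (rule eq_vecI)
  fix i assume "i < dim_vec (col A j)"
  then have i: "i < N" using assms by simp
  have "(A *\<^sub>v unit_vec N j) $ i = (\<Sum>k\<in>{0..<N}. A $$ (i,k) * (if k = j then 1 else 0))"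
    using assms i by (auto simp: scalar_prod_def intro!: sum.cong)
  also have "\<dots> = A $$ (i,j)" using assms(2) by (simp add: sum.delta if_distrib[of "(*) _"] cong: if_cong)
  finally show "(A *\<^sub>v unit_vec N j) $ i = col A j $ i" using assms i by simp
qed (use assms in auto)

lemma Lambda_kill: assumes X: "X \<in> carrier_mat (4^n) (4^n)"
  and K: "\<forall>v\<in>carrier_vec (4^n). X *\<^sub>v v \<in> Kspace n"
  shows "Lambda n * X = 0\<^sub>m (4^n) (4^n)"
proof (rule eq_matI)
  fix i j assume "i < dim_row (0\<^sub>m (4^n) (4^n) :: complex mat)" "j < dim_col (0\<^sub>m (4^n) (4^n) :: complex mat)"
  then have ij: "i < 4^n" "j < 4^n" by auto
  have "X *\<^sub>v unit_vec (4^n) j \<in> mat_kernel (Lambda n)" using K unfolding Kspace_def by auto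
  then have "Lambda n *\<^sub>v col X j = 0\<^sub>v (4^n)"
    unfolding mult_unit_vec[OF X ij(2)] mat_kernel_def by simp
  moreover have "col (Lambda n * X) j = Lambda n *\<^sub>v col X j"
    by (rule col_mult2[OF Lambda_carrier X ij(2)])
  ultimately have "col (Lambda n * X) j $ i = 0" using ij by simp
  then show "(Lambda n * X) $$ (i,j) = 0\<^sub>m (4^n) (4^n) $$ (i,j)" using ij X by simp
qed (use X in auto)

lemma PI_fix_vec: assumes v: "v \<in> mat_kernel (Lambda n)"
  shows "PI n *\<^sub>v v = v"
proof -
  let ?N = "4^n"
  have vc: "v \<in> carrier_vec ?N" and Lv: "Lambda n *\<^sub>v v = 0\<^sub>v ?N"
    using v unfolding mat_kernel_def by auto
  define Y where "Y = mat ?N ?N (\<lambda>(i,j). v $ i)"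
  have Y: "Y \<in> carrier_mat ?N ?N" unfolding Y_def by simp
  have colY: "col Y j = v" if "j < ?N" for j
    using that vc unfolding Y_def by (intro eq_vecI) auto
  have LY: "Lambda n * Y = 0\<^sub>m ?N ?N"
  proof (rule eq_matI)
    fix i j assume "i < dim_row (0\<^sub>m ?N ?N :: complex mat)" "j < dim_col (0\<^sub>m ?N ?N :: complex mat)"
    then have ij: "i < ?N" "j < ?N" by auto
    have "col (Lambda n * Y) j = Lambda n *\<^sub>v col Y j" by (rule col_mult2[OF Lambda_carrier Y ij(2)])
    then have "col (Lambda n * Y) j = 0\<^sub>v ?N" unfolding colY[OF ij(2)] Lv .
    then have "col (Lambda n * Y) j $ i = 0" using ij by simp
    then show "(Lambda n * Y) $$ (i,j) = 0\<^sub>m ?N ?N $$ (i,j)" using ij Y by simp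
  qed (use Y in auto)
  have PY: "PI n * Y = Y" by (rule PI_fix[OF Y LY])
  have pos: "0 < (4::nat)^n" by simp
  have "col (PI n * Y) 0 = PI n *\<^sub>v col Y 0" by (rule col_mult2[OF PI_carrier Y pos])
  then show ?thesis unfolding PY colY[OF pos] by simp
qed

lemma PI_image: "(\<lambda>v. PI n *\<^sub>v v) ` carrier_vec (4^n) = Kspace n"
proof
  show "(\<lambda>v. PI n *\<^sub>v v) ` carrier_vec (4^n) \<subseteq> Kspace n"
  proof
    fix w assume "w \<in> (\<lambda>v. PI n *\<^sub>v v) ` carrier_vec (4^n)"
    then obtain v where v: "v \<in> carrier_vec (4^n)" and w: "w = PI n *\<^sub>v v" by auto
    have "Lambda n *\<^sub>v w = (Lambda n * PI n) *\<^sub>v v" unfolding w by (rule assoc_mult_mat_vec[OF Lambda_carrier PI_carrier v, symmetric])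
    also have "\<dots> = 0\<^sub>v (4^n)" unfolding Lambda_PI using v by (intro eq_vecI) (auto simp: scalar_prod_def)
    moreover have "w \<in> carrier_vec (4^n)" unfolding w using mult_mat_vec_carrier[OF PI_carrier v] .
    ultimately show "w \<in> Kspace n" unfolding Kspace_def mat_kernel_def by simp
  qed
  show "Kspace n \<subseteq> (\<lambda>v. PI n *\<^sub>v v) ` carrier_vec (4^n)"
  proof
    fix v assume v: "v \<in> Kspace n"
    then have "v \<in> carrier_vec (4^n)" unfolding Kspace_def mat_kernel_def by simp
    moreover have "v = PI n *\<^sub>v v" using PI_fix_vec v unfolding Kspace_def by simp
    ultimately show "v \<in> (\<lambda>v. PI n *\<^sub>v v) ` carrier_vec (4^n)" by blast
  qed
qed

lemma PI_orth: "is_orth_proj (4^n) (PI n) (Kspace n)"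
  unfolding is_orth_proj_def using PI_herm PI_idem PI_image by simp

lemma mat_eq_vec: fixes A :: "complex mat" assumes "A \<in> carrier_mat N N" "B \<in> carrier_mat N N"
  "\<And>v. v \<in> carrier_vec N \<Longrightarrow> A *\<^sub>v v = B *\<^sub>v v"
  shows "A = B"
proof (rule eq_matI)
  fix i j assume "i < dim_row B" "j < dim_col B"
  then have ij: "i < N" "j < N" using assms by auto
  have "col A j = col B j" using assms(3)[of "unit_vec N j"] mult_unit_vec[OF assms(1) ij(2)] mult_unit_vec[OF assms(2) ij(2)] by simp
  then have "col A j $ i = col B j $ i" by simp
  then show "A $$ (i,j) = B $$ (i,j)" using ij assms by simp
qed (use assms in auto)

lemma orth_unique: assumes P: "is_orth_proj N P S" and Q: "is_orth_proj N Q S" shows "P = Q"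
proof -
  have Pc: "P \<in> carrier_mat N N" and Ph: "dag P = P" and Pi: "P * P = P" and Pim: "(\<lambda>v. P *\<^sub>v v) ` carrier_vec N = S"
    using P unfolding is_orth_proj_def by auto
  have Qc: "Q \<in> carrier_mat N N" and Qh: "dag Q = Q" and Qi: "Q * Q = Q" and Qim: "(\<lambda>v. Q *\<^sub>v v) ` carrier_vec N = S"
    using Q unfolding is_orth_proj_def by auto
  have fix1: "X * Y = Y" if Xc: "X \<in> carrier_mat N N" and Yc: "Y \<in> carrier_mat N N" and Xi: "X * X = X"
    and im: "(\<lambda>v. Y *\<^sub>v v) ` carrier_vec N = (\<lambda>v. X *\<^sub>v v) ` carrier_vec N" for X Y :: "complex mat"
  proof (rule mat_eq_vec[of _ N])
    show "X * Y \<in> carrier_mat N N" using Xc Yc by simp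
    show "Y \<in> carrier_mat N N" by (rule Yc)
    fix v :: "complex vec" assume v: "v \<in> carrier_vec N"
    have "Y *\<^sub>v v \<in> (\<lambda>v. X *\<^sub>v v) ` carrier_vec N" using im v by blast
    then obtain w where w: "w \<in> carrier_vec N" "Y *\<^sub>v v = X *\<^sub>v w" by auto
    have "(X * Y) *\<^sub>v v = X *\<^sub>v (Y *\<^sub>v v)" using Xc Yc v by simp
    also have "\<dots> = (X * X) *\<^sub>v w" unfolding w(2) using Xc w(1) by simp
    also have "\<dots> = Y *\<^sub>v v" unfolding Xi w(2) ..
    finally show "(X * Y) *\<^sub>v v = Y *\<^sub>v v" .
  qed
  have QP: "Q * P = P" by (rule fix1[OF Qc Pc Qi]) (simp add: Pim Qim)
  have PQ: "P * Q = Q" by (rule fix1[OF Pc Qc Pi]) (simp add: Pim Qim)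
  have "P = dag P" using Ph by simp
  also have "\<dots> = dag (Q * P)" unfolding QP ..
  also have "\<dots> = dag P * dag Q" by (rule dag_mult[OF Qc Pc])
  also have "\<dots> = Q" unfolding Ph Qh PQ ..
  finally show ?thesis .
qed

lemma orth_proj_PI: "orth_proj (4^n) (Kspace n) = PI n"
  unfolding orth_proj_def
proof (rule the_equality)
  show "is_orth_proj (4^n) (PI n) (Kspace n)" by (rule PI_orth)
  fix P assume "is_orth_proj (4^n) P (Kspace n)"
  then show "P = PI n" by (rule orth_unique[OF _ PI_orth])
qed


lemma PI_vec_entry: assumes v: "v \<in> carrier_vec (4^n)" and i: "i < 4^n"
  shows "(PI n *\<^sub>v v) $ i = (\<Sum>A\<in>Bal n. (PP n A *\<^sub>v v) $ i)"
proof -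
  have "(PI n *\<^sub>v v) $ i = (\<Sum>k<4^n. (\<Sum>A\<in>Bal n. PP n A $$ (i,k)) * v $ k)"
    unfolding PI_def using v i by (auto simp: scalar_prod_def lessThan_atLeast0 intro!: sum.cong)
  also have "\<dots> = (\<Sum>A\<in>Bal n. \<Sum>k<4^n. PP n A $$ (i,k) * v $ k)"
    by (simp add: sum_distrib_right sum.swap[of _ "Bal n"])
  also have "\<dots> = (\<Sum>A\<in>Bal n. (PP n A *\<^sub>v v) $ i)"
    using v i by (auto simp: scalar_prod_def lessThan_atLeast0 intro!: sum.cong)
  finally show ?thesis .
qed

lemma kernel_dim_Bal: "kernel_dim (Lambda n) = card (Bal n)"
proof -
  let ?N = "4^n"
  interpret K: kernel ?N ?N "Lambda n" by unfold_locales simp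
  have "\<forall>A\<in>Bal n. \<exists>u. u \<in> carrier_vec ?N \<and> u \<noteq> 0\<^sub>v ?N \<and> PP n A *\<^sub>v u = u \<and> (\<forall>v\<in>carrier_vec ?N. \<exists>c. PP n A *\<^sub>v v = c \<cdot>\<^sub>v u)"
  proof
    fix A assume A: "A \<in> Bal n"
    interpret herm_proj ?N "PP n A" by (rule PP_proj[OF Bal_bits[OF A]])
    obtain u where "u \<in> carrier_vec ?N" "u \<noteq> 0\<^sub>v ?N" "PP n A *\<^sub>v u = u"
      "\<And>v. v \<in> carrier_vec ?N \<Longrightarrow> \<exists>c. PP n A *\<^sub>v v = c \<cdot>\<^sub>v u"
      using vec_rank_one[OF mtrace_PP[OF Bal_bits[OF A]]] by blast
    then show "\<exists>u. u \<in> carrier_vec ?N \<and> u \<noteq> 0\<^sub>v ?N \<and> PP n A *\<^sub>v u = u \<and> (\<forall>v\<in>carrier_vec ?N. \<exists>c. PP n A *\<^sub>v v = c \<cdot>\<^sub>v u)"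
      by blast
  qed
  then obtain u where u: "\<And>A. A \<in> Bal n \<Longrightarrow> u A \<in> carrier_vec ?N \<and> u A \<noteq> 0\<^sub>v ?N \<and> PP n A *\<^sub>v u A = u A \<and> (\<forall>v\<in>carrier_vec ?N. \<exists>c. PP n A *\<^sub>v v = c \<cdot>\<^sub>v u A)"
    using bchoice[of "Bal n"] by metis
  have uc: "u A \<in> carrier_vec ?N" if "A \<in> Bal n" for A using u[OF that] by blast
  have u0: "u A \<noteq> 0\<^sub>v ?N" if "A \<in> Bal n" for A using u[OF that] by blast
  have Pu: "PP n A *\<^sub>v u A = u A" if "A \<in> Bal n" for A using u[OF that] by blast
  have PPu: "PP n A *\<^sub>v u B = (if A = B then u A else 0\<^sub>v ?N)" if A: "A \<in> Bal n" and B: "B \<in> Bal n" for A B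
  proof -
    have "PP n A *\<^sub>v u B = PP n A *\<^sub>v (PP n B *\<^sub>v u B)" using Pu[OF B] by simp
    also have "\<dots> = (PP n A * PP n B) *\<^sub>v u B" by (rule assoc_mult_mat_vec[symmetric, OF PP_carrier PP_carrier uc[OF B]])
    also have "\<dots> = (if A = B then PP n A else 0\<^sub>m ?N ?N) *\<^sub>v u B" using A B Bal_bits by (simp add: PP_mult)
    also have "\<dots> = (if A = B then u A else 0\<^sub>v ?N)"
      using Pu[OF A] uc[OF B] by (auto intro!: eq_vecI simp: scalar_prod_def)
    finally show ?thesis .
  qed
  have inj: "inj_on u (Bal n)"
  proof (rule inj_onI)
    fix A B assume A: "A \<in> Bal n" and B: "B \<in> Bal n" and e: "u A = u B"
    show "A = B"
    proof (rule ccontr)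
      assume "A \<noteq> B"
      then have "PP n A *\<^sub>v u B = 0\<^sub>v ?N" using PPu[OF A B] by simp
      then have "u A = 0\<^sub>v ?N" using Pu[OF A] e by simp
      then show False using u0[OF A] by simp
    qed
  qed
  have uK: "u A \<in> mat_kernel (Lambda n)" if A: "A \<in> Bal n" for A
  proof -
    have "Lambda n *\<^sub>v u A = Lambda n *\<^sub>v (PP n A *\<^sub>v u A)" using Pu[OF A] by simp
    also have "\<dots> = (Lambda n * PP n A) *\<^sub>v u A" by (rule assoc_mult_mat_vec[symmetric, OF Lambda_carrier PP_carrier uc[OF A]])
    also have "\<dots> = 0\<^sub>v ?N" unfolding Lambda_PP mu_Bal[OF A] using uc[OF A] by (auto intro!: eq_vecI simp: scalar_prod_def)
    finally show ?thesis using uc[OF A] unfolding mat_kernel_def by simp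
  qed
  let ?B = "u ` Bal n"
  have sub: "?B \<subseteq> mat_kernel (Lambda n)" using uK by auto
  have finB: "finite ?B" by simp
  have span: "K.span ?B = mat_kernel (Lambda n)"
  proof
    show "K.span ?B \<subseteq> mat_kernel (Lambda n)" using K.Ker.span_is_subset2[OF sub] by simp
    show "mat_kernel (Lambda n) \<subseteq> K.span ?B"
    proof
      fix v assume vK: "v \<in> mat_kernel (Lambda n)"
      then have v: "v \<in> carrier_vec ?N" unfolding mat_kernel_def by simp
      have "\<forall>A\<in>Bal n. \<exists>c. PP n A *\<^sub>v v = c \<cdot>\<^sub>v u A" using u v by blast
      then obtain c where c: "\<And>A. A \<in> Bal n \<Longrightarrow> PP n A *\<^sub>v v = c A \<cdot>\<^sub>v u A"
        using bchoice[of "Bal n"] by metis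
      define a where "a = (\<lambda>b. c (the_inv_into (Bal n) u b))"
      have diml: "dim_vec (K.lincomb a ?B) = ?N"
        using K.Ker.lincomb_closed[OF sub] unfolding mat_kernel_def by auto
      have "v = K.lincomb a ?B"
      proof (rule eq_vecI)
        fix i assume "i < dim_vec (K.lincomb a ?B)"
        then have i: "i < ?N" using diml by simp
        have "K.lincomb a ?B $ i = (\<Sum>b\<in>?B. a b * b $ i)" by (rule K.lincomb_index[OF i sub])
        also have "\<dots> = (\<Sum>A\<in>Bal n. a (u A) * u A $ i)" by (simp add: sum.reindex[OF inj])
        also have "\<dots> = (\<Sum>A\<in>Bal n. (PP n A *\<^sub>v v) $ i)"
        proof (rule sum.cong[OF refl])
          fix A assume A: "A \<in> Bal n"
          have "a (u A) = c A" unfolding a_def using the_inv_into_f_f[OF inj A] by simp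
          then show "a (u A) * u A $ i = (PP n A *\<^sub>v v) $ i" unfolding c[OF A] using uc[OF A] i by simp
        qed
        also have "\<dots> = (PI n *\<^sub>v v) $ i" by (rule PI_vec_entry[OF v i, symmetric])
        also have "\<dots> = v $ i" using PI_fix_vec[OF vK] by simp
        finally show "v $ i = K.lincomb a ?B $ i" by simp
      qed (use v diml in auto)
      then show "v \<in> K.span ?B" unfolding K.Ker.span_def using finB by blast
    qed
  qed
  have li: "K.lin_indpt ?B"
  proof (rule K.Ker.finite_lin_indpt2[OF finB])
    show "?B \<subseteq> mat_kernel (Lambda n)" using sub by simp
    fix a assume "a \<in> ?B \<rightarrow> UNIV" and lc': "K.lincomb a ?B = 0\<^sub>v ?N"
    show "\<forall>b\<in>?B. a b = 0"
    proof
      fix b assume "b \<in> ?B"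
      then obtain A where A: "A \<in> Bal n" and b: "b = u A" by auto
      have ent: "a (u A) * u A $ i = 0" if i: "i < ?N" for i
      proof -
        have "0 = (PP n A *\<^sub>v K.lincomb a ?B) $ i" unfolding lc' using i by (simp add: scalar_prod_def)
        also have "\<dots> = (\<Sum>k<?N. PP n A $$ (i,k) * K.lincomb a ?B $ k)"
          using i unfolding lc' by (auto simp: scalar_prod_def lessThan_atLeast0 intro!: sum.cong)
        also have "\<dots> = (\<Sum>k<?N. PP n A $$ (i,k) * (\<Sum>b'\<in>?B. a b' * b' $ k))"
          by (rule sum.cong[OF refl]) (simp add: K.lincomb_index[OF _ sub])
        also have "\<dots> = (\<Sum>b'\<in>?B. a b' * (\<Sum>k<?N. PP n A $$ (i,k) * b' $ k))"
          by (simp add: sum_distrib_left sum.swap[of _ ?B] mult_ac)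
        also have "\<dots> = (\<Sum>B\<in>Bal n. a (u B) * (\<Sum>k<?N. PP n A $$ (i,k) * u B $ k))"
          by (simp add: sum.reindex[OF inj])
        also have "\<dots> = (\<Sum>B\<in>Bal n. a (u B) * (PP n A *\<^sub>v u B) $ i)"
        proof (rule sum.cong[OF refl])
          fix B assume B: "B \<in> Bal n"
          have "dim_vec (u B) = ?N" using uc[OF B] by simp
          then have "(PP n A *\<^sub>v u B) $ i = (\<Sum>k<?N. PP n A $$ (i,k) * u B $ k)"
            using i by (auto simp: scalar_prod_def lessThan_atLeast0 intro!: sum.cong)
          then show "a (u B) * (\<Sum>k<?N. PP n A $$ (i,k) * u B $ k) = a (u B) * (PP n A *\<^sub>v u B) $ i" by simp
        qed
        also have "\<dots> = (\<Sum>B\<in>Bal n. if B = A then a (u A) * u A $ i else 0)"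
          by (rule sum.cong[OF refl]) (use i A in \<open>auto simp: PPu\<close>)
        also have "\<dots> = a (u A) * u A $ i" using A by simp
        finally show ?thesis by simp
      qed
      have "\<exists>i<?N. u A $ i \<noteq> 0"
      proof (rule ccontr)
        assume "\<not> ?thesis"
        then have "u A = 0\<^sub>v ?N" using uc[OF A] by (intro eq_vecI) auto
        then show False using u0[OF A] by simp
      qed
      then obtain i where "i < ?N" "u A $ i \<noteq> 0" by blast
      then have "a (u A) = 0" using ent by (metis mult_eq_0_iff)
      then show "a b = 0" unfolding b by simp
    qed
  qed
  have "K.basis ?B" unfolding K.Ker.basis_def using li span sub by simp
  then have "K.dim = card ?B" by (rule K.Ker.dim_basis[OF finB, rotated])
  then show ?thesis using card_image[OF inj] by simp
qed


theorem lemma11: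
  fixes n :: nat and \<rho> :: "complex mat"
    and I :: "'i set" and pr :: "'i \<Rightarrow> real" and U :: "'i \<Rightarrow> complex mat"
  assumes "density_op (4 ^ n) \<rho>"
    and "\<forall>v\<in>carrier_vec (4 ^ n). \<rho> *\<^sub>v v \<in> Kspace n"
    and "gaussian_ensemble n I pr U"
    and "majorana_mixing n I pr U"
  shows "channel n I pr U \<rho> = (1 / of_nat (kernel_dim (Lambda n))) \<cdot>\<^sub>m orth_proj (4 ^ n) (Kspace n)"
proof -
  have rc: "\<rho> \<in> carrier_mat (4^n) (4^n)" and tr: "mtrace \<rho> = 1"
    using assms(1) unfolding density_op_def by auto
  have L: "Lambda n * \<rho> = 0\<^sub>m (4^n) (4^n)" by (rule Lambda_kill[OF rc assms(2)])
  define M0 where "M0 = GG n I pr U (PP n (A0 n))"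
  have M0c: "M0 \<in> carrier_mat (4^n) (4^n)" unfolding M0_def GG_def by simp
  have "channel n I pr U \<rho> = mtrace \<rho> \<cdot>\<^sub>m M0"
    unfolding M0_def by (rule channel_K[OF rc L V_carriers[OF assms(3)] assms(4)])
  then have ch: "channel n I pr U \<rho> = M0" unfolding tr by simp
  have PIe: "PI n = of_nat (card (Bal n)) \<cdot>\<^sub>m M0"
    unfolding M0_def by (rule PI_eq_M0[OF assms(3,4)])
  have cpos: "card (Bal n) \<noteq> 0" using A0_Bal[of n] finite_Bal[of n] by (metis card_0_eq empty_iff)
  have "(1 / of_nat (kernel_dim (Lambda n))) \<cdot>\<^sub>m orth_proj (4 ^ n) (Kspace n)
     = (1 / of_nat (card (Bal n))) \<cdot>\<^sub>m (of_nat (card (Bal n)) \<cdot>\<^sub>m M0)"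
    unfolding kernel_dim_Bal orth_proj_PI PIe ..
  also have "\<dots> = M0" using cpos by (simp add: smult_smult)
  finally show ?thesis using ch by simp
qed


end
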